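(* Let $0<\varepsilon\le1$, $\alpha\in(0,1)$, $\xi(x)=e^{-\alpha x^2/(2\sqrt\varepsilon)}$ and $f_{2m}=x^{2m}\xi$ for $m\in\{0,1,2,\dots\}$. Then $$S_\varepsilon f_{2m}=-\frac{i}{2\sqrt\varepsilon}\,\Lambda_m(x,\alpha)\,\xi(x),$$ and consequently, for all $n,m\ge0$, $$(f_{2n},S_\varepsilon f_{2m})=-\frac{i}{2\sqrt\varepsilon}\int_{\mathbb R}\xi(x)\,x^{2n}\Lambda_m(x,\alpha)\,\xi(x)\,dx.$$
   Context: Work in $L^2(\mathbb{R})$ with $(f,g)=\int\overline fg\,dx$. Let $q$ be multiplication by $x$, $p=-i\,d/dx$, $t=q^{-1}p$ with $D(t)=\{f\in D(p):pf\in D(q^{-1})\}$, $L^2_0$ the even subspace. Define $S_\varepsilon$ in $L^2_0$ by $D(S_\varepsilon)=\{f\in L^2_0\cap\bigcap_nD(t^{2n+1}):\sum_{n=0}^N\frac{(-1)^n}{2n+1}(\sqrt\varepsilon t)^{2n+1}f$ converges in norm$\}$, $S_\varepsilon f=-\varepsilon^{-1/2}\sum_{n\ge0}\frac{(-1)^n}{2n+1}(\sqrt\varepsilon t)^{2n+1}f$. For $k\ge0$, $\Lambda_k(x,\alpha)=\big(x^2-2\sqrt\varepsilon\frac{\partial}{\partial\alpha}\big)^k\log\frac{1+\alpha}{1-\alpha}$, the operator $x^2-2\sqrt\varepsilon\,\partial_\alpha$ acting in the variable $\alpha$ with $x$ treated as a parameter. *)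

theory Defs
  imports "HOL-Analysis.Analysis"
begin

text \<open>Elements of L2(R) are represented by (Lebesgue measurable) functions real => complex;
  all identities between L2 elements are up to equality almost everywhere.
  Unbounded operators are represented by their graphs (relations).\<close>

definition L2 :: "(real \<Rightarrow> complex) \<Rightarrow> bool" where
  "L2 f \<longleftrightarrow> f \<in> borel_measurable lebesgue \<and>
            integrable lebesgue (\<lambda>x. (cmod (f x))\<^sup>2)"

definition L2_even :: "(real \<Rightarrow> complex) \<Rightarrow> bool" where
  "L2_even f \<longleftrightarrow> L2 f \<and> (AE x in lebesgue. f (- x) = f x)"

definition test_fun :: "(real \<Rightarrow> real) \<Rightarrow> bool" where
  "test_fun \<phi> \<longleftrightarrow> (\<forall>k x. ((deriv ^^ k) \<phi>) differentiable (at x)) \<and>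
                   (\<exists>R. \<forall>x. R < \<bar>x\<bar> \<longrightarrow> \<phi> x = 0)"

definition weak_deriv :: "(real \<Rightarrow> complex) \<Rightarrow> (real \<Rightarrow> complex) \<Rightarrow> bool" where
  "weak_deriv f g \<longleftrightarrow> (\<forall>\<phi>. test_fun \<phi> \<longrightarrow>
      integral\<^sup>L lebesgue (\<lambda>x. f x * of_real (deriv \<phi> x))
        = - integral\<^sup>L lebesgue (\<lambda>x. g x * of_real (\<phi> x)))"

text \<open>Graph of p = -i d/dx on its maximal domain D(p) = H^1: p_rel f h means f in D(p), p f = h.\<close>
definition p_rel :: "(real \<Rightarrow> complex) \<Rightarrow> (real \<Rightarrow> complex) \<Rightarrow> bool" where
  "p_rel f h \<longleftrightarrow> L2 f \<and> L2 h \<and> weak_deriv f (\<lambda>x. \<i> * h x)"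

text \<open>Graph of t = q^{-1} p, D(t) = {f in D(p). p f in D(q^{-1})}: t f = h means h = (p f)/x a.e.\<close>
definition t_rel :: "(real \<Rightarrow> complex) \<Rightarrow> (real \<Rightarrow> complex) \<Rightarrow> bool" where
  "t_rel f h \<longleftrightarrow> (\<exists>g. p_rel f g \<and> L2 h \<and> (AE x in lebesgue. g x = of_real x * h x))"

fun t_pow :: "nat \<Rightarrow> (real \<Rightarrow> complex) \<Rightarrow> (real \<Rightarrow> complex) \<Rightarrow> bool" where
  "t_pow 0 f h \<longleftrightarrow> L2 f \<and> (AE x in lebesgue. h x = f x)"
| "t_pow (Suc k) f h \<longleftrightarrow> (\<exists>g. t_rel f g \<and> t_pow k g h)"

text \<open>Graph of S_eps: S_rel eps f h means f in D(S_eps) and S_eps f = h. The norm-convergence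
  of the partial sums sum_{n<=N} (-1)^n/(2n+1) (sqrt eps t)^(2n+1) f to the limit -sqrt eps * h
  is expressed by the L2 distance tending to 0.\<close>
definition S_rel :: "real \<Rightarrow> (real \<Rightarrow> complex) \<Rightarrow> (real \<Rightarrow> complex) \<Rightarrow> bool" where
  "S_rel \<epsilon> f h \<longleftrightarrow> L2_even f \<and> L2 h \<and>
     (\<exists>T :: nat \<Rightarrow> real \<Rightarrow> complex.
        (\<forall>n. t_pow (2 * n + 1) f (T n)) \<and>
        ((\<lambda>N. integral\<^sup>L lebesgue (\<lambda>x. (cmod ((\<Sum>n\<le>N. of_real ((-1) ^ n / real (2 * n + 1)
                 * sqrt \<epsilon> ^ (2 * n + 1)) * T n x) - of_real (- sqrt \<epsilon>) * h x))\<^sup>2))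
          \<longlonglongrightarrow> 0))"

primrec Lambda :: "real \<Rightarrow> nat \<Rightarrow> real \<Rightarrow> real \<Rightarrow> real" where
  "Lambda \<epsilon> 0 x = (\<lambda>a. ln ((1 + a) / (1 - a)))"
| "Lambda \<epsilon> (Suc k) x = (\<lambda>a. x\<^sup>2 * Lambda \<epsilon> k x a - 2 * sqrt \<epsilon> * deriv (Lambda \<epsilon> k x) a)"

end

theory Submission
  imports Defs "HOL-Computational_Algebra.Polynomial" "HOL-Probability.Distributions"
begin

definition smooth :: "(real \<Rightarrow> real) \<Rightarrow> bool" where
  "smooth f \<longleftrightarrow> (\<forall>k x. ((deriv ^^ k) f) differentiable (at x))"

lemma smooth_by_class:
  assumes "f \<in> A" "\<And>g. g \<in> A \<Longrightarrow> (\<forall>x. g differentiable (at x)) \<and> deriv g \<in> A"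
  shows "smooth f"
proof -
  have "(deriv ^^ k) f \<in> A" for k
    by (induction k) (use assms in auto)
  then show ?thesis unfolding smooth_def using assms(2) by blast
qed

lemma smooth_differentiable: "smooth f \<Longrightarrow> f differentiable (at x)"
  unfolding smooth_def by (metis funpow_0)

lemma smooth_DERIV: "smooth f \<Longrightarrow> (f has_real_derivative deriv f x) (at x)"
  using smooth_differentiable DERIV_deriv_iff_real_differentiable by blast

lemma smooth_deriv: "smooth f \<Longrightarrow> smooth (deriv f)"
  unfolding smooth_def by (metis funpow_Suc_right o_apply)

lemma deriv_fun_eq:
  assumes "\<And>x. (f has_real_derivative g x) (at x)"
  shows "deriv f = g"
  using assms DERIV_imp_deriv by blast

lemma smooth_const: "smooth (\<lambda>_. c)"
proof (rule smooth_by_class[where A="{\<lambda>_. c | c. True}"])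
  fix h assume "h \<in> {\<lambda>_::real. c | c::real. True}"
  then obtain c where h: "h = (\<lambda>_. c)" by blast
  have "deriv h = (\<lambda>_. 0)" unfolding h by (rule deriv_fun_eq) auto
  then show "(\<forall>x. h differentiable (at x)) \<and> deriv h \<in> {\<lambda>_. c | c. True}"
    unfolding h by auto
qed auto

lemma smooth_add:
  assumes "smooth f" "smooth g" shows "smooth (\<lambda>x. f x + g x)"
proof (rule smooth_by_class[where A="{\<lambda>x. f x + g x | f g. smooth f \<and> smooth g}"])
  fix h assume "h \<in> {\<lambda>x. f x + g x | f g. smooth f \<and> smooth g}"
  then obtain f g where h: "h = (\<lambda>x. f x + g x)" "smooth f" "smooth g" by blast
  have d: "(h has_real_derivative deriv f x + deriv g x) (at x)" for x
    unfolding h by (intro derivative_intros smooth_DERIV h)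
  show "(\<forall>x. h differentiable (at x)) \<and> deriv h \<in> {\<lambda>x. f x + g x | f g. smooth f \<and> smooth g}"
    using d deriv_fun_eq[OF d] smooth_deriv h real_differentiable_def by blast
qed (use assms in blast)

lemma smooth_scale_affine:
  assumes "smooth f" shows "smooth (\<lambda>x. r * f (s * x + c))"
proof (rule smooth_by_class[where A="{\<lambda>x. r * f (s * x + c) | r f. smooth f}"])
  fix h assume "h \<in> {\<lambda>x. r * f (s * x + c) | r f. smooth f}"
  then obtain r f where h: "h = (\<lambda>x. r * f (s * x + c))" "smooth f" by blast
  have d: "(h has_real_derivative (r * s) * deriv f (s * x + c)) (at x)" for x
  proof -
    have "((\<lambda>x. f (s * x + c)) has_real_derivative deriv f (s * x + c) * s) (at x)"
      by (rule DERIV_chain2[OF smooth_DERIV[OF h(2)]]) (auto intro!: derivative_eq_intros)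
    from DERIV_cmult[OF this, of r] show ?thesis unfolding h by (simp add: mult_ac)
  qed
  show "(\<forall>x. h differentiable (at x)) \<and> deriv h \<in> {\<lambda>x. r * f (s * x + c) | r f. smooth f}"
    using d deriv_fun_eq[OF d] smooth_deriv h real_differentiable_def by blast
qed (use assms in blast)

definition SP :: "((real \<Rightarrow> real) \<times> (real \<Rightarrow> real)) list \<Rightarrow> real \<Rightarrow> real" where
  "SP L x = sum_list (map (\<lambda>(f,g). f x * g x) L)"

definition DL :: "((real \<Rightarrow> real) \<times> (real \<Rightarrow> real)) list \<Rightarrow> ((real \<Rightarrow> real) \<times> (real \<Rightarrow> real)) list" where
  "DL L = concat (map (\<lambda>(f,g). [(deriv f, g), (f, deriv g)]) L)"

lemma SP_deriv:
  assumes "\<forall>(f,g)\<in>set L. smooth f \<and> smooth g"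
  shows "(SP L has_real_derivative SP (DL L) x) (at x)"
  using assms
proof (induction L)
  case Nil
  then show ?case by (simp add: SP_def DL_def)
next
  case (Cons p L)
  obtain f g where p: "p = (f,g)" by fastforce
  have sf: "smooth f" "smooth g" using Cons.prems p by auto
  have e1: "SP (p # L) = (\<lambda>x. f x * g x + SP L x)" by (auto simp: SP_def p)
  have e2: "SP (DL (p # L)) x = deriv f x * g x + f x * deriv g x + SP (DL L) x"
    by (simp add: SP_def DL_def p)
  have ih: "(SP L has_real_derivative SP (DL L) x) (at x)" using Cons.IH Cons.prems by auto
  show ?case unfolding e1 e2
    using DERIV_add[OF DERIV_mult[OF smooth_DERIV[OF sf(1)] smooth_DERIV[OF sf(2)]] ih]
    by (simp add: mult_ac)
qed

lemma DL_smooth: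
  assumes "\<forall>(f,g)\<in>set L. smooth f \<and> smooth g"
  shows "\<forall>(f,g)\<in>set (DL L). smooth f \<and> smooth g"
  using assms by (auto simp: DL_def smooth_deriv)

lemma smooth_mult:
  assumes "smooth f" "smooth g" shows "smooth (\<lambda>x. f x * g x)"
proof (rule smooth_by_class[where A="{SP L | L. \<forall>(f,g)\<in>set L. smooth f \<and> smooth g}"])
  show "(\<lambda>x. f x * g x) \<in> {SP L | L. \<forall>(f,g)\<in>set L. smooth f \<and> smooth g}"
    using assms by (intro CollectI exI[of _ "[(f,g)]"]) (auto simp: SP_def fun_eq_iff)
next
  fix h assume "h \<in> {SP L | L. \<forall>(f,g)\<in>set L. smooth f \<and> smooth g}"
  then obtain L where h: "h = SP L" "\<forall>(f,g)\<in>set L. smooth f \<and> smooth g" by blast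
  have d: "(h has_real_derivative SP (DL L) x) (at x)" for x
    unfolding h(1) by (rule SP_deriv[OF h(2)])
  show "(\<forall>x. h differentiable (at x)) \<and> deriv h \<in> {SP L | L. \<forall>(f,g)\<in>set L. smooth f \<and> smooth g}"
    using d deriv_fun_eq[OF d] DL_smooth[OF h(2)] real_differentiable_def by blast
qed

lemma smooth_power: "smooth f \<Longrightarrow> smooth (\<lambda>x. f x ^ n)"
  by (induction n) (auto intro: smooth_mult smooth_const)

lemma smooth_diff: "smooth f \<Longrightarrow> smooth g \<Longrightarrow> smooth (\<lambda>x. f x - g x)"
  using smooth_add[of f "\<lambda>x. (-1) * g (1 * x + 0)"] smooth_scale_affine[of g "-1" 1 0] by simp


definition Gp :: "real poly \<Rightarrow> real \<Rightarrow> real" where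
  "Gp p x = (if 0 < x then poly p (1/x) * exp (-1/x) else 0)"

definition Gq :: "real poly \<Rightarrow> real poly" where
  "Gq p = [:0,0,1:] * (p - pderiv p)"

lemma poly_div_exp_0: "((\<lambda>z. poly p z / exp z) \<longlongrightarrow> (0::real)) at_top"
proof -
  have "((\<lambda>z. \<Sum>i\<le>degree p. coeff p i * (z ^ i / exp z)) \<longlongrightarrow> (\<Sum>i\<le>degree p. coeff p i * 0)) at_top"
    by (intro tendsto_sum tendsto_mult tendsto_const tendsto_power_div_exp_0)
  then show ?thesis
    by (simp add: poly_altdef sum_divide_distrib)
qed

lemma Gp_deriv: "(Gp p has_real_derivative Gp (Gq p) x) (at x)"
proof (cases "0 < x")
  case True
  let ?H = "\<lambda>x. poly p (1/x) * exp (-1/x)"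
  have "(?H has_real_derivative
          poly (pderiv p) (1/x) * (- 1 / x^2) * exp (-1/x) + poly p (1/x) * (exp (-1/x) * (1/x^2))) (at x)"
    using True
    by (auto intro!: derivative_eq_intros DERIV_chain2[OF poly_DERIV] simp: power2_eq_square)
  moreover have "poly (pderiv p) (1/x) * (- 1 / x^2) * exp (-1/x) + poly p (1/x) * (exp (-1/x) * (1/x^2))
      = Gp (Gq p) x"
    using True by (simp add: Gp_def Gq_def algebra_simps power2_eq_square divide_simps)
  ultimately have "(?H has_real_derivative Gp (Gq p) x) (at x)" by simp
  then show ?thesis
    by (rule has_field_derivative_transform_within_open[where S="{0<..}"]) (use True in \<open>auto simp: Gp_def\<close>)
next
  case False
  show ?thesis
  proof (cases "x < 0")
    case True
    have "((\<lambda>_. 0) has_real_derivative 0) (at x)" by simp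
    then have "(Gp p has_real_derivative 0) (at x)"
      by (rule has_field_derivative_transform_within_open[where S="{..<0}"]) (use True in \<open>auto simp: Gp_def\<close>)
    then show ?thesis using True by (simp add: Gp_def)
  next
    case False
    with \<open>\<not> 0 < x\<close> have x: "x = 0" by simp
    have "((\<lambda>y. (Gp p y - Gp p 0) / (y - 0)) \<longlongrightarrow> 0) (at_left 0)"
    proof (rule Lim_transform_eventually[OF tendsto_const])
      show "\<forall>\<^sub>F y in at_left 0. 0 = (Gp p y - Gp p 0) / (y - 0)"
        using eventually_at_left_real[of "-1" "0::real"] by (auto elim!: eventually_mono simp: Gp_def)
    qed
    moreover have "((\<lambda>y. (Gp p y - Gp p 0) / (y - 0)) \<longlongrightarrow> 0) (at_right 0)"
    proof -
      have "((\<lambda>y. poly (pCons 0 p) (inverse y) / exp (inverse y)) \<longlongrightarrow> 0) (at_right 0)"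
        by (rule filterlim_compose[OF poly_div_exp_0 filterlim_inverse_at_top_right])
      then show ?thesis
      proof (rule Lim_transform_eventually)
        show "\<forall>\<^sub>F y in at_right 0. poly (pCons 0 p) (inverse y) / exp (inverse y) = (Gp p y - Gp p 0) / (y - 0)"
          using eventually_at_right_real[of "0::real" 1]
          by (auto elim!: eventually_mono simp: Gp_def exp_minus field_simps)
      qed
    qed
    ultimately have "((\<lambda>y. (Gp p y - Gp p 0) / (y - 0)) \<longlongrightarrow> 0) (at 0)"
      by (rule filterlim_split_at)
    then show ?thesis unfolding x has_field_derivative_iff by (simp add: Gp_def)
  qed
qed

lemma smooth_Gp: "smooth (Gp p)"
proof (rule smooth_by_class[where A="range Gp"])
  fix g assume "g \<in> range Gp"
  then obtain p where g: "g = Gp p" by blast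
  have "deriv g = Gp (Gq p)" unfolding g by (rule deriv_fun_eq[OF Gp_deriv])
  then show "(\<forall>x. g differentiable (at x)) \<and> deriv g \<in> range Gp"
    using Gp_deriv g real_differentiable_def by blast
qed auto

definition psi :: "real \<Rightarrow> real" where
  "psi x = (if 0 < x then exp (-1/x) else 0)"

lemma psi_Gp: "psi = Gp 1"
  by (auto simp: psi_def Gp_def fun_eq_iff)

lemma smooth_psi: "smooth psi"
  by (simp add: smooth_Gp psi_Gp)

lemma psi_nonneg: "0 \<le> psi x" and psi_le1: "psi x \<le> 1" and psi_pos: "0 < x \<Longrightarrow> 0 < psi x"
  and psi_zero: "x \<le> 0 \<Longrightarrow> psi x = 0"
  by (auto simp: psi_def)

definition bumpB :: "real \<Rightarrow> real \<Rightarrow> real \<Rightarrow> real" where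
  "bumpB a b x = psi (1 * x + (- a)) * psi ((-1) * x + b)"

definition phiN :: "real \<Rightarrow> real \<Rightarrow> nat \<Rightarrow> real \<Rightarrow> real" where
  "phiN a b n x = 1 - (1 - bumpB a b x) ^ n"

lemma smooth_bumpB: "smooth (bumpB a b)"
  unfolding bumpB_def[abs_def]
  using smooth_mult[OF smooth_scale_affine[OF smooth_psi, of 1 1 "-a"] smooth_scale_affine[OF smooth_psi, of 1 "-1" b]]
  by simp

lemma smooth_phiN: "smooth (phiN a b n)"
  unfolding phiN_def[abs_def]
  by (intro smooth_diff smooth_const smooth_power smooth_bumpB)

lemma bumpB_range: "0 \<le> bumpB a b x" "bumpB a b x \<le> 1"
  unfolding bumpB_def using psi_nonneg psi_le1
  by (auto intro: mult_nonneg_nonneg mult_le_one)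

lemma bumpB_out: "x \<le> a \<or> b \<le> x \<Longrightarrow> bumpB a b x = 0"
  unfolding bumpB_def by (auto simp: psi_zero)

lemma bumpB_in: "a < x \<Longrightarrow> x < b \<Longrightarrow> 0 < bumpB a b x"
  unfolding bumpB_def by (auto intro!: mult_pos_pos psi_pos)

lemma phiN_range: "0 \<le> phiN a b n x" "phiN a b n x \<le> 1"
  unfolding phiN_def using bumpB_range[of a b x]
  by (auto intro!: power_le_one)

lemma phiN_out: "x \<le> a \<or> b \<le> x \<Longrightarrow> phiN a b n x = 0"
  unfolding phiN_def by (simp add: bumpB_out)

lemma phiN_lim: "(\<lambda>n. phiN a b n x) \<longlonglongrightarrow> indicator {a<..<b} x"
proof (cases "a < x \<and> x < b")
  case True
  then have "norm (1 - bumpB a b x) < 1" using bumpB_in[of a x b] bumpB_range[of a b x] by auto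
  then have "(\<lambda>n. 1 - (1 - bumpB a b x) ^ n) \<longlonglongrightarrow> 1 - 0"
    by (intro tendsto_intros)
  then show ?thesis using True by (simp add: phiN_def indicator_def)
next
  case False
  then show ?thesis by (auto simp: phiN_out indicator_def)
qed

lemma test_fun_phiN: "test_fun (phiN a b n)"
  unfolding test_fun_def
proof
  show "\<forall>k x. (deriv ^^ k) (phiN a b n) differentiable at x"
    using smooth_phiN unfolding smooth_def by blast
  show "\<exists>R. \<forall>x. R < \<bar>x\<bar> \<longrightarrow> phiN a b n x = 0"
    by (rule exI[of _ "\<bar>a\<bar> + \<bar>b\<bar>"]) (auto intro!: phiN_out)
qed


lemma integral_zero_iff_nn:
  fixes g :: "'a \<Rightarrow> real"
  assumes "integrable M g"
  shows "integral\<^sup>L M g = 0 \<longleftrightarrow> (\<integral>\<^sup>+x. ennreal (g x) \<partial>M) = (\<integral>\<^sup>+x. ennreal (- g x) \<partial>M)"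
proof -
  have f1: "(\<integral>\<^sup>+x. ennreal (g x) \<partial>M) \<noteq> \<infinity>" "(\<integral>\<^sup>+x. ennreal (- g x) \<partial>M) \<noteq> \<infinity>"
    using integrableD[OF assms] by auto
  have "enn2real A = enn2real B \<longleftrightarrow> A = B" if "A \<noteq> \<infinity>" "B \<noteq> \<infinity>" for A B :: ennreal
    using that by (cases A; cases B) auto
  from this[OF f1] show ?thesis
    unfolding real_lebesgue_integral_def[OF assms] by simp
qed

lemma fund_real_borel:
  fixes v :: "real \<Rightarrow> real"
  assumes v[measurable]: "v \<in> borel_measurable borel"
  assumes int: "\<And>a b. a < b \<Longrightarrow> integrable lborel (\<lambda>x. v x * indicator {a<..<b} x)"
  assumes zero: "\<And>a b. a < b \<Longrightarrow> (\<integral>x. v x * indicator {a<..<b} x \<partial>lborel) = 0"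
  shows "AE x in lborel. v x = 0"
proof -
  have "AE x in lborel. x \<in> {- real n - 1<..<real n + 1} \<longrightarrow> v x = 0" for n :: nat
  proof -
    define w where "w = (\<lambda>x. v x * indicator {- real n - 1<..<real n + 1} x)"
    have [measurable]: "w \<in> borel_measurable borel" unfolding w_def by measurable
    have wint: "integrable lborel w" unfolding w_def by (rule int) simp
    have gen: "integrable lborel (\<lambda>y. w y * indicator A y) \<and> (\<integral>\<^sup>+y. ennreal (w y * indicator A y) \<partial>lborel) = (\<integral>\<^sup>+y. ennreal (- (w y * indicator A y)) \<partial>lborel)"
      if A: "A \<in> sets borel" "integral\<^sup>L lborel (\<lambda>y. w y * indicator A y) = 0" for A
    proof -
      have "integrable lborel (\<lambda>y. indicator A y *\<^sub>R w y)"
        using A by (intro integrable_mult_indicator wint) auto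
      then have i: "integrable lborel (\<lambda>y. w y * indicator A y)" by (simp add: mult.commute)
      show ?thesis using i integral_zero_iff_nn[OF i] A by simp
    qed
    define M1 where "M1 = density lborel (\<lambda>y. ennreal (w y))"
    define M2 where "M2 = density lborel (\<lambda>y. ennreal (- w y))"
    have em: "emeasure M1 A = (\<integral>\<^sup>+y. ennreal (w y * indicator A y) \<partial>lborel)"
             "emeasure M2 A = (\<integral>\<^sup>+y. ennreal (- (w y * indicator A y)) \<partial>lborel)"
      if "A \<in> sets borel" for A
      unfolding M1_def M2_def using that
      by (auto simp: emeasure_density intro!: nn_integral_cong split: split_indicator)
    have Ioi: "integral\<^sup>L lborel (\<lambda>y. w y * indicator {x<..} y) = 0" for x
    proof (cases "max x (- real n - 1) < real n + 1")
      case True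
      have "(\<lambda>y. w y * indicator {x<..} y) = (\<lambda>y. v y * indicator {max x (- real n - 1)<..<real n + 1} y)"
        by (auto simp: w_def fun_eq_iff split: split_indicator)
      then show ?thesis using zero[OF True] by simp
    next
      case False
      have "(\<lambda>y. w y * indicator {x<..} y) = (\<lambda>y. 0)"
        using False by (auto simp: w_def fun_eq_iff split: split_indicator)
      then show ?thesis by simp
    qed
    have "M1 = M2"
    proof (rule measure_eqI_lessThan)
      show "sets M1 = sets borel" "sets M2 = sets borel" by (simp_all add: M1_def M2_def)
      fix x :: real
      have g: "integrable lborel (\<lambda>y. w y * indicator {x<..} y)" "(\<integral>\<^sup>+y. ennreal (w y * indicator {x<..} y) \<partial>lborel) = (\<integral>\<^sup>+y. ennreal (- (w y * indicator {x<..} y)) \<partial>lborel)"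
        using gen[of "{x<..}"] Ioi[of x] by auto
      show "emeasure M1 {x<..} < \<infinity>"
        using em(1)[of "{x<..}"] integrableD(2)[OF g(1)] by (simp add: top.not_eq_extremum)
      show "emeasure M1 {x<..} = emeasure M2 {x<..}"
        using em[of "{x<..}"] g(2) by simp
    qed
    have "AE y in lborel. w y = 0"
    proof (rule density_unique_real[where f'="\<lambda>_. 0", OF wint])
      fix A :: "real set" assume A: "A \<in> sets lborel"
      have "integrable lborel (\<lambda>y. indicator A y *\<^sub>R w y)"
        using A by (intro integrable_mult_indicator wint) auto
      then have i: "integrable lborel (\<lambda>y. w y * indicator A y)" by (simp add: mult.commute)
      have "emeasure M1 A = emeasure M2 A" using \<open>M1 = M2\<close> by simp
      then have "integral\<^sup>L lborel (\<lambda>y. w y * indicator A y) = 0"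
        using em[of A] A integral_zero_iff_nn[OF i] by simp
      then show "(\<integral>x \<in> A. w x \<partial>lborel) = (\<integral>x \<in> A. 0 \<partial>lborel)"
        by (simp add: set_lebesgue_integral_def mult.commute)
    qed simp
    then show ?thesis by eventually_elim (auto simp: w_def)
  qed
  then have "AE x in lborel. \<forall>n::nat. x \<in> {- real n - 1<..<real n + 1} \<longrightarrow> v x = 0"
    by (rule AE_all_countable[THEN iffD2, OF allI])
  then show ?thesis
  proof eventually_elim
    case (elim x)
    have "\<bar>x\<bar> \<le> real (nat \<lceil>\<bar>x\<bar>\<rceil>)" by (simp add: real_nat_ceiling_ge)
    then have "x \<in> {- real (nat \<lceil>\<bar>x\<bar>\<rceil>) - 1<..<real (nat \<lceil>\<bar>x\<bar>\<rceil>) + 1}"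
      by (simp only: greaterThanLessThan_iff) linarith
    then show ?case using elim by blast
  qed
qed


lemma cont_meas_leb:
  fixes f :: "real \<Rightarrow> 'b::{banach, second_countable_topology}"
  assumes c: "continuous_on UNIV f" shows "f \<in> borel_measurable lebesgue"
proof -
  have "f \<in> borel_measurable borel" by (rule borel_measurable_continuous_onI[OF c])
  then have "f \<in> borel_measurable lborel" by simp
  then show ?thesis by (rule measurable_completion)
qed

lemma leb_ident[measurable]: "(\<lambda>x::real. x) \<in> borel_measurable lebesgue"
  by (rule cont_meas_leb) (rule continuous_on_id)

lemma leb_Ioo[measurable]: "{a<..<b::real} \<in> sets lebesgue"
  using sets_completionI_sets[of "{a<..<b}" lborel] by simp

lemma smooth_cont: "smooth f \<Longrightarrow> continuous_on UNIV f"
  by (meson continuous_at_imp_continuous_on differentiable_imp_continuous_within smooth_differentiable)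

lemma integrable_Ioo_leb: "integrable lebesgue (indicator {a<..<b} :: real \<Rightarrow> real)"
  by (cases "a \<le> b") (auto simp: integrable_indicator_iff)

lemma fund_real_leb:
  fixes v :: "real \<Rightarrow> real"
  assumes v[measurable]: "v \<in> borel_measurable lebesgue"
  assumes int: "\<And>a b. a < b \<Longrightarrow> integrable lebesgue (\<lambda>x. v x * indicator {a<..<b} x)"
  assumes zero: "\<And>a b. a < b \<Longrightarrow> (\<integral>x. v x * indicator {a<..<b} x \<partial>lebesgue) = 0"
  shows "AE x in lebesgue. v x = 0"
proof -
  obtain v' where v': "v' \<in> borel_measurable lborel" "AE x in lborel. v x = v' x"
    using completion_ex_borel_measurable_real[OF v] by blast
  have v'b[measurable]: "v' \<in> borel_measurable borel" using v'(1) by simp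
  have v'L[measurable]: "v' \<in> borel_measurable lebesgue" using v'(1) by (rule measurable_completion)
  have ae: "AE x in lebesgue. v x * indicator {a<..<b} x = v' x * indicator {a<..<b} x" for a b :: real
    using AE_completion[OF v'(2)] by eventually_elim simp
  have "AE x in lborel. v' x = 0"
  proof (rule fund_real_borel[OF v'b])
    fix a b :: real assume ab: "a < b"
    have i: "integrable lebesgue (\<lambda>x. v' x * indicator {a<..<b} x)"
    proof -
      have "integrable lebesgue (\<lambda>x. v x * indicator {a<..<b} x) \<longleftrightarrow> integrable lebesgue (\<lambda>x. v' x * indicator {a<..<b} x)"
      proof (rule integrable_cong_AE)
        show "(\<lambda>x. v x * indicator {a<..<b} x) \<in> borel_measurable lebesgue" by measurable
        show "(\<lambda>x. v' x * indicator {a<..<b} x) \<in> borel_measurable lebesgue" by measurable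
      qed (rule ae)
      then show ?thesis using int[OF ab] by simp
    qed
    show "integrable lborel (\<lambda>x. v' x * indicator {a<..<b} x)"
      using i integrable_completion[of "\<lambda>x. v' x * indicator {a<..<b} x" lborel] by simp
    have "(\<integral>x. v' x * indicator {a<..<b} x \<partial>lborel) = (\<integral>x. v' x * indicator {a<..<b} x \<partial>lebesgue)"
      by (rule integral_completion[symmetric]) simp
    also have "\<dots> = (\<integral>x. v x * indicator {a<..<b} x \<partial>lebesgue)"
      proof (rule integral_cong_AE)
        show "(\<lambda>x. v x * indicator {a<..<b} x) \<in> borel_measurable lebesgue" by measurable
        show "(\<lambda>x. v' x * indicator {a<..<b} x) \<in> borel_measurable lebesgue" by measurable
        show "AE x in lebesgue. v' x * indicator {a<..<b} x = v x * indicator {a<..<b} x"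
          using ae[of a b] by eventually_elim auto
      qed
    finally show "(\<integral>x. v' x * indicator {a<..<b} x \<partial>lborel) = 0" using zero[OF ab] by simp
  qed
  with v'(2) have "AE x in lborel. v x = 0" by eventually_elim simp
  then show ?thesis by (rule AE_completion)
qed

lemma fund_lemma:
  fixes u :: "real \<Rightarrow> complex"
  assumes L2: "L2 u"
  assumes z: "\<And>\<phi>. test_fun \<phi> \<Longrightarrow> (\<integral>x. u x * of_real (\<phi> x) \<partial>lebesgue) = 0"
  shows "AE x in lebesgue. u x = 0"
proof -
  have um[measurable]: "u \<in> borel_measurable lebesgue" and u2: "integrable lebesgue (\<lambda>x. (cmod (u x))\<^sup>2)"
    using L2 by (auto simp: L2_def)
  have lim: "(\<integral>x. u x * of_real (indicator {a<..<b} x) \<partial>lebesgue) = 0"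
     and intg: "integrable lebesgue (\<lambda>x. u x * of_real (indicator {a<..<b} x))" if ab: "a < b" for a b :: real
  proof -
    define w where "w = (\<lambda>x. (cmod (u x))\<^sup>2 + indicator {a<..<b} x :: real)"
    have wi: "integrable lebesgue w" unfolding w_def using u2 integrable_Ioo_leb by auto
    have pm: "phiN a b n \<in> borel_measurable lebesgue" for n
      by (rule cont_meas_leb[OF smooth_cont[OF smooth_phiN]])
    have bnd: "cmod (u x * of_real r) \<le> w x" if "0 \<le> r" "r \<le> indicator {a<..<b} x" for x r
    proof -
      have "cmod (u x * of_real r) = cmod (u x) * r" using that by (simp add: norm_mult)
      also have "\<dots> \<le> cmod (u x) * indicator {a<..<b} x" using that by (simp add: mult_left_mono)
      also have "\<dots> \<le> w x"
      proof -
        have "0 \<le> (cmod (u x) - 1/2)\<^sup>2" by simp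
        then have "cmod (u x) \<le> (cmod (u x))\<^sup>2 + 1" by (simp add: power2_eq_square algebra_simps)
        then show ?thesis unfolding w_def by (auto split: split_indicator)
      qed
      finally show ?thesis .
    qed
    have phi_le: "phiN a b n x \<le> indicator {a<..<b} x" for n x
      using phiN_range[of a b n x] phiN_out[of x a b n] by (auto split: split_indicator)
    have fm: "(\<lambda>x. u x * of_real (indicator {a<..<b} x)) \<in> borel_measurable lebesgue" by measurable
    have sm: "(\<lambda>x. u x * of_real (phiN a b n x)) \<in> borel_measurable lebesgue" for n
      using pm[of n] by measurable
    have conv: "AE x in lebesgue. (\<lambda>n. u x * of_real (phiN a b n x)) \<longlonglongrightarrow> u x * of_real (indicator {a<..<b} x)"
      by (intro AE_I2 tendsto_mult tendsto_const tendsto_of_real phiN_lim)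
    have bd: "AE x in lebesgue. cmod (u x * of_real (phiN a b n x)) \<le> w x" for n
      using bnd phiN_range phi_le by auto
    have l: "(\<lambda>n. \<integral>x. u x * of_real (phiN a b n x) \<partial>lebesgue) \<longlonglongrightarrow> (\<integral>x. u x * of_real (indicator {a<..<b} x) \<partial>lebesgue)"
      by (rule integral_dominated_convergence[OF fm sm wi conv bd])
    have z0: "(\<lambda>n. \<integral>x. u x * of_real (phiN a b n x) \<partial>lebesgue) = (\<lambda>n. 0)"
      by (rule ext, rule z[OF test_fun_phiN])
    from l have "(\<lambda>n. 0::complex) \<longlonglongrightarrow> (\<integral>x. u x * of_real (indicator {a<..<b} x) \<partial>lebesgue)"
      unfolding z0 .
    from LIMSEQ_unique[OF this tendsto_const]
    show "(\<integral>x. u x * of_real (indicator {a<..<b} x) \<partial>lebesgue) = 0" .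
    show "integrable lebesgue (\<lambda>x. u x * of_real (indicator {a<..<b} x))"
      by (rule integrable_dominated_convergence[OF fm sm wi conv bd])
  qed
  have re: "AE x in lebesgue. Re (u x) = 0"
  proof (rule fund_real_leb)
    show "(\<lambda>x. Re (u x)) \<in> borel_measurable lebesgue" by measurable
    fix a b :: real assume ab: "a < b"
    have e: "(\<lambda>x. Re (u x) * indicator {a<..<b} x) = (\<lambda>x. Re (u x * of_real (indicator {a<..<b} x)))"
      by auto
    show "integrable lebesgue (\<lambda>x. Re (u x) * indicator {a<..<b} x)"
      unfolding e using intg[OF ab] by (rule integrable_Re)
    show "(\<integral>x. Re (u x) * indicator {a<..<b} x \<partial>lebesgue) = 0"
      unfolding e using integral_Re[OF intg[OF ab]] lim[OF ab] by simp
  qed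
  have im: "AE x in lebesgue. Im (u x) = 0"
  proof (rule fund_real_leb)
    show "(\<lambda>x. Im (u x)) \<in> borel_measurable lebesgue" by measurable
    fix a b :: real assume ab: "a < b"
    have e: "(\<lambda>x. Im (u x) * indicator {a<..<b} x) = (\<lambda>x. Im (u x * of_real (indicator {a<..<b} x)))"
      by auto
    show "integrable lebesgue (\<lambda>x. Im (u x) * indicator {a<..<b} x)"
      unfolding e using intg[OF ab] by (rule integrable_Im)
    show "(\<integral>x. Im (u x) * indicator {a<..<b} x \<partial>lebesgue) = 0"
      unfolding e using integral_Im[OF intg[OF ab]] lim[OF ab] by simp
  qed
  from re im show ?thesis by eventually_elim (simp add: complex_eq_iff)
qed


definition xi :: "real \<Rightarrow> real \<Rightarrow> real" where
  "xi \<kappa> x = exp (- (\<kappa> * x\<^sup>2 / 2))"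

lemma xi_pos: "0 < xi \<kappa> x" by (simp add: xi_def)

lemma gauss_int:
  assumes d: "0 < d"
  shows "integrable lebesgue (\<lambda>x::real. x ^ k * exp (- (d * x\<^sup>2)))"
proof -
  define \<sigma> where "\<sigma> = 1 / sqrt (2*d)"
  have sp: "0 < \<sigma>" using d by (simp add: \<sigma>_def)
  have \<sigma>2: "\<sigma>\<^sup>2 = 1/(2*d)" using d by (simp add: \<sigma>_def power_divide)
  have "integrable lborel (\<lambda>x. normal_density 0 \<sigma> x * (x - 0)^k)"
    by (rule integrable_normal_moment[OF sp])
  then have X: "integrable lborel (\<lambda>x. sqrt (2*pi*\<sigma>\<^sup>2) * (normal_density 0 \<sigma> x * (x - 0)^k))"
    by (intro integrable_mult_right)
  have eq: "(\<lambda>x. sqrt (2*pi*\<sigma>\<^sup>2) * (normal_density 0 \<sigma> x * (x - 0)^k)) = (\<lambda>x. x ^ k * exp (- (d * x\<^sup>2)))"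
    using d sp by (simp add: normal_density_def \<sigma>2 field_simps fun_eq_iff)
  have "integrable lborel (\<lambda>x::real. x ^ k * exp (- (d * x\<^sup>2)))" using X unfolding eq .
  then show ?thesis
    by (subst integrable_completion) auto
qed

lemma pow_le_1p: "0 \<le> (y::real) \<Longrightarrow> e \<le> m \<Longrightarrow> y ^ e \<le> 1 + y ^ m"
proof (cases "y \<le> 1")
  case True
  assume "0 \<le> y" "e \<le> m"
  then have "y ^ e \<le> 1" using True by (simp add: power_le_one)
  then show ?thesis using \<open>0 \<le> y\<close> by (smt (verit) zero_le_power)
next
  case False
  assume "0 \<le> y" "e \<le> m"
  then have "y ^ e \<le> y ^ m" using False by (intro power_increasing) auto
  then show ?thesis by simp
qed

lemma L2_bound:
  assumes k: "0 < \<kappa>" and hm: "h \<in> borel_measurable lebesgue"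
  assumes b: "\<And>x. cmod (h x) \<le> C * (1 + \<bar>x\<bar> ^ N) * xi \<kappa> x"
  shows "L2 h"
  unfolding L2_def
proof (intro conjI hm)
  let ?f = "\<lambda>x::real. 2 * C\<^sup>2 * (x ^ 0 * exp (- (\<kappa> * x\<^sup>2)) + x ^ (2*N) * exp (- (\<kappa> * x\<^sup>2)))"
  have fi: "integrable lebesgue ?f"
    using gauss_int[OF k, of 0] gauss_int[OF k, of "2*N"] by (intro integrable_mult_right integrable_add) auto
  show "integrable lebesgue (\<lambda>x. (cmod (h x))\<^sup>2)"
  proof (rule Bochner_Integration.integrable_bound[OF fi])
    show "(\<lambda>x. (cmod (h x))\<^sup>2) \<in> borel_measurable lebesgue" using hm by measurable
    show "AE x in lebesgue. norm ((cmod (h x))\<^sup>2) \<le> norm (?f x)"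
    proof (intro AE_I2)
      fix x :: real
      have x2: "(xi \<kappa> x)\<^sup>2 = exp (- (\<kappa> * x\<^sup>2))"
        by (simp add: xi_def power2_eq_square exp_add[symmetric])
      have a: "\<bar>x\<bar> ^ (2*N) = x ^ (2*N)" by (simp add: power_even_abs)
      have "(cmod (h x))\<^sup>2 \<le> (C * (1 + \<bar>x\<bar> ^ N) * xi \<kappa> x)\<^sup>2"
        using b[of x] by (intro power_mono) auto
      also have "\<dots> = C\<^sup>2 * (1 + \<bar>x\<bar> ^ N)\<^sup>2 * exp (- (\<kappa> * x\<^sup>2))"
        by (simp add: power_mult_distrib x2)
      also have "\<dots> \<le> C\<^sup>2 * (2 * (1 + \<bar>x\<bar> ^ (2*N))) * exp (- (\<kappa> * x\<^sup>2))"
      proof -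
        have sq: "(1 + t)\<^sup>2 \<le> 2 * (1 + t\<^sup>2)" for t :: real
        proof -
          have "0 \<le> (1 - t)\<^sup>2" by simp
          then show ?thesis by (simp add: power2_eq_square algebra_simps)
        qed
        have e: "\<bar>x\<bar> ^ (2*N) = (\<bar>x\<bar> ^ N)\<^sup>2" by (simp add: power_mult[symmetric] mult.commute)
        have "(1 + \<bar>x\<bar> ^ N)\<^sup>2 \<le> 2 * (1 + \<bar>x\<bar> ^ (2*N))" unfolding e by (rule sq)
        then show ?thesis by (intro mult_right_mono mult_left_mono) auto
      qed
      also have "\<dots> = ?f x" using a by (simp add: algebra_simps)
      finally show "norm ((cmod (h x))\<^sup>2) \<le> norm (?f x)" by simp
    qed
  qed
qed

definition GP :: "real \<Rightarrow> nat \<Rightarrow> (nat \<Rightarrow> complex) \<Rightarrow> real \<Rightarrow> complex" where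
  "GP \<kappa> m a x = (\<Sum>j\<le>m. a j * of_real ((x\<^sup>2) ^ (m - j))) * of_real (xi \<kappa> x)"

definition tstep :: "real \<Rightarrow> nat \<Rightarrow> (nat \<Rightarrow> complex) \<Rightarrow> nat \<Rightarrow> complex" where
  "tstep \<kappa> m a j = \<i> * of_real \<kappa> * a j - (if j = 0 then 0 else 2 * \<i> * of_nat (m - j + 1) * a (j - 1))"

lemma GP_cont: "continuous_on UNIV (GP \<kappa> m a)"
  unfolding GP_def[abs_def] xi_def by (intro continuous_intros) auto

lemma GP_meas: "GP \<kappa> m a \<in> borel_measurable lebesgue"
  by (rule cont_meas_leb[OF GP_cont])

lemma GP_bound: "cmod (GP \<kappa> m a x) \<le> (\<Sum>j\<le>m. cmod (a j)) * (1 + \<bar>x\<bar> ^ (2*m)) * xi \<kappa> x"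
proof -
  have "cmod (\<Sum>j\<le>m. a j * of_real ((x\<^sup>2) ^ (m - j))) \<le> (\<Sum>j\<le>m. cmod (a j * of_real ((x\<^sup>2) ^ (m - j))))"
    by (rule norm_sum)
  also have "\<dots> \<le> (\<Sum>j\<le>m. cmod (a j) * (1 + \<bar>x\<bar> ^ (2*m)))"
  proof (rule sum_mono)
    fix j assume "j \<in> {..m}"
    have "(x\<^sup>2) ^ (m - j) \<le> 1 + (x\<^sup>2) ^ m" by (rule pow_le_1p) auto
    also have "(x\<^sup>2) ^ m = \<bar>x\<bar> ^ (2*m)" by (simp add: power_mult power_even_abs)
    finally have le: "(x\<^sup>2) ^ (m - j) \<le> 1 + \<bar>x\<bar> ^ (2*m)" .
    have "cmod (a j * of_real ((x\<^sup>2) ^ (m - j))) = cmod (a j) * \<bar>(x\<^sup>2) ^ (m - j)\<bar>"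
      by (simp only: norm_mult norm_of_real)
    also have "\<dots> = cmod (a j) * (x\<^sup>2) ^ (m - j)" by simp
    also have "\<dots> \<le> cmod (a j) * (1 + \<bar>x\<bar> ^ (2*m))" using le by (simp add: mult_left_mono)
    finally show "cmod (a j * of_real ((x\<^sup>2) ^ (m - j))) \<le> cmod (a j) * (1 + \<bar>x\<bar> ^ (2*m))" .
  qed
  also have "\<dots> = (\<Sum>j\<le>m. cmod (a j)) * (1 + \<bar>x\<bar> ^ (2*m))" by (simp add: sum_distrib_right)
  finally have "cmod (\<Sum>j\<le>m. a j * of_real ((x\<^sup>2) ^ (m - j))) \<le> (\<Sum>j\<le>m. cmod (a j)) * (1 + \<bar>x\<bar> ^ (2*m))" .
  then show ?thesis unfolding GP_def norm_mult using xi_pos[of \<kappa> x]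
    by (simp add: mult_right_mono)
qed

lemma GP_L2: "0 < \<kappa> \<Longrightarrow> L2 (GP \<kappa> m a)"
  by (rule L2_bound[OF _ GP_meas GP_bound])

lemma xGP_L2:
  assumes k: "0 < \<kappa>" shows "L2 (\<lambda>x. of_real x * GP \<kappa> m a x)"
proof (rule L2_bound[OF k])
  show "(\<lambda>x. complex_of_real x * GP \<kappa> m a x) \<in> borel_measurable lebesgue"
    using GP_meas by measurable
  fix x :: real
  let ?S = "\<Sum>j\<le>m. cmod (a j)"
  have S0: "0 \<le> ?S" by (simp add: sum_nonneg)
  have "cmod (of_real x * GP \<kappa> m a x) = \<bar>x\<bar> * cmod (GP \<kappa> m a x)" by (simp add: norm_mult)
  also have "\<dots> \<le> \<bar>x\<bar> * (?S * (1 + \<bar>x\<bar> ^ (2*m)) * xi \<kappa> x)"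
    by (intro mult_left_mono GP_bound) auto
  also have "\<dots> = ?S * (\<bar>x\<bar> ^ 1 + \<bar>x\<bar> ^ (2*m+1)) * xi \<kappa> x" by (simp add: algebra_simps)
  also have "\<dots> \<le> ?S * (2 * (1 + \<bar>x\<bar> ^ (2*m+1))) * xi \<kappa> x"
  proof -
    have "\<bar>x\<bar> ^ 1 \<le> 1 + \<bar>x\<bar> ^ (2*m+1)" by (rule pow_le_1p) auto
    then have "\<bar>x\<bar> ^ 1 + \<bar>x\<bar> ^ (2*m+1) \<le> 2 * (1 + \<bar>x\<bar> ^ (2*m+1))" by simp
    then show ?thesis using S0 xi_pos[of \<kappa> x] by (intro mult_right_mono mult_left_mono) auto
  qed
  also have "\<dots> = (2 * ?S) * (1 + \<bar>x\<bar> ^ (2*m+1)) * xi \<kappa> x" by simp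
  finally show "cmod (of_real x * GP \<kappa> m a x) \<le> (2 * ?S) * (1 + \<bar>x\<bar> ^ (2*m+1)) * xi \<kappa> x" .
qed


definition Fc :: "real \<Rightarrow> nat \<Rightarrow> (nat \<Rightarrow> complex) \<Rightarrow> complex \<Rightarrow> complex" where
  "Fc \<kappa> m a z = (\<Sum>j\<le>m. a j * (z\<^sup>2) ^ (m - j)) * exp (- (of_real \<kappa> * z\<^sup>2 / 2))"

lemma GP_Fc: "GP \<kappa> m a x = Fc \<kappa> m a (of_real x)"
proof -
  have "of_real (xi \<kappa> x) = exp (- (of_real \<kappa> * (of_real x)\<^sup>2 / 2) :: complex)"
    unfolding xi_def exp_of_real[symmetric] by simp
  then show ?thesis unfolding GP_def Fc_def by simp
qed

lemma reidx:
  fixes y :: complex and g :: "nat \<Rightarrow> complex"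
  shows "(\<Sum>j\<le>m. of_nat (m - j) * g j * y ^ (m - j - 1))
       = (\<Sum>j\<le>m. (if j = 0 then 0 else of_nat (m - j + 1) * g (j - 1) * y ^ (m - j)))"
proof (cases m)
  case 0
  then show ?thesis by simp
next
  case (Suc n)
  have "(\<Sum>j\<le>m. (if j = 0 then 0 else of_nat (m - j + 1) * g (j - 1) * y ^ (m - j)))
      = (\<Sum>j\<le>n. of_nat (n - j + 1) * g j * y ^ (n - j))"
    unfolding Suc sum.atMost_Suc_shift by simp
  also have "\<dots> = (\<Sum>j\<le>n. of_nat (m - j) * g j * y ^ (m - j - 1))"
    by (rule sum.cong) (auto simp: Suc Suc_diff_le)
  also have "\<dots> = (\<Sum>j\<le>m. of_nat (m - j) * g j * y ^ (m - j - 1))"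
    unfolding Suc sum.atMost_Suc by simp
  finally show ?thesis by simp
qed

lemma Fc_deriv:
  "(Fc \<kappa> m a has_field_derivative (\<i> * z * Fc \<kappa> m (tstep \<kappa> m a) z)) (at z)"
proof -
  define E where "E = exp (- (of_real \<kappa> * z\<^sup>2 / 2))"
  define S1 where "S1 = (\<Sum>j\<le>m. a j * (z\<^sup>2) ^ (m - j))"
  define S2 where "S2 = (\<Sum>j\<le>m. of_nat (m - j) * a j * (z\<^sup>2) ^ (m - j - 1))"
  define S3 where "S3 = (\<Sum>j\<le>m. a j * (of_nat (m - j) * (2 * z * (z\<^sup>2) ^ (m - j - 1))))"
  have d1: "((\<lambda>z. \<Sum>j\<le>m. a j * (z\<^sup>2) ^ (m - j)) has_field_derivative S3) (at z)"
    unfolding S3_def by (intro DERIV_sum DERIV_cmult DERIV_power) (auto intro!: derivative_eq_intros)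
  have d2: "((\<lambda>z. exp (- (of_real \<kappa> * z\<^sup>2 / 2))) has_field_derivative E * (- (of_real \<kappa> * z))) (at z)"
    unfolding E_def by (auto intro!: derivative_eq_intros)
  have d: "(Fc \<kappa> m a has_field_derivative S1 * (E * (- (of_real \<kappa> * z))) + S3 * E) (at z)"
    unfolding Fc_def[abs_def] using DERIV_mult'[OF d1 d2] by (simp add: E_def S1_def)
  have S3: "S3 = 2 * z * S2"
    unfolding S3_def S2_def sum_distrib_left by (rule sum.cong) (simp_all add: mult_ac)
  have t: "\<i> * tstep \<kappa> m a j * (z\<^sup>2) ^ (m - j) = - (of_real \<kappa> * (a j * (z\<^sup>2) ^ (m - j)))
          + 2 * (if j = 0 then 0 else of_nat (m - j + 1) * a (j - 1) * (z\<^sup>2) ^ (m - j))" for j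
    by (simp add: tstep_def algebra_simps)
  have s: "(\<Sum>j\<le>m. \<i> * tstep \<kappa> m a j * (z\<^sup>2) ^ (m - j)) = - (of_real \<kappa> * S1) + 2 * S2"
    unfolding t S1_def S2_def reidx by (simp add: sum_subtractf sum_distrib_left sum_negf)
  have "\<i> * z * Fc \<kappa> m (tstep \<kappa> m a) z = z * E * (\<Sum>j\<le>m. \<i> * tstep \<kappa> m a j * (z\<^sup>2) ^ (m - j))"
    unfolding Fc_def E_def by (simp add: sum_distrib_left algebra_simps)
  also have "\<dots> = S1 * (E * (- (of_real \<kappa> * z))) + S3 * E"
    unfolding s S3 by (simp add: algebra_simps)
  finally show ?thesis using d by simp
qed

lemma GP_vderiv:
  "(GP \<kappa> m a has_vector_derivative (\<i> * (of_real x * GP \<kappa> m (tstep \<kappa> m a) x))) (at x)"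
proof -
  have "((\<lambda>x. Fc \<kappa> m a (of_real x)) has_vector_derivative (\<i> * of_real x * Fc \<kappa> m (tstep \<kappa> m a) (of_real x))) (at x)"
    by (rule has_vector_derivative_real_field[OF Fc_deriv])
  then show ?thesis unfolding GP_Fc[abs_def] by (simp add: mult.assoc)
qed

lemma compact_integral:
  fixes g :: "real \<Rightarrow> complex"
  assumes gc: "continuous_on UNIV g" and z: "\<And>x. x \<notin> {a..b} \<Longrightarrow> g x = 0"
  shows "integrable lebesgue g" "integral\<^sup>L lebesgue g = integral {a..b} g"
proof -
  have eq: "(\<lambda>x. indicator {a..b} x *\<^sub>R g x) = g" using z by (auto simp: fun_eq_iff split: split_indicator)
  have "integrable lborel (\<lambda>x. indicator {a..b} x *\<^sub>R g x)"
    by (rule borel_integrable_compact) (auto intro: continuous_on_subset[OF gc])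
  then have il: "integrable lborel g" unfolding eq .
  have gm: "g \<in> borel_measurable lborel" using borel_measurable_continuous_onI[OF gc] by simp
  show il2: "integrable lebesgue g" using il integrable_completion[OF gm] by simp
  have "integral\<^sup>L lebesgue g = integral UNIV g" by (rule integral_lebesgue[symmetric, OF il2])
  also have "integral UNIV g = integral UNIV (\<lambda>x. if x \<in> {a..b} then g x else 0)"
    by (rule arg_cong[where f="integral UNIV"]) (use z in auto)
  also have "\<dots> = integral {a..b} g" by (rule integral_restrict_UNIV)
  finally show "integral\<^sup>L lebesgue g = integral {a..b} g" .
qed

lemma weak_deriv_C1:
  fixes F F' :: "real \<Rightarrow> complex"
  assumes F: "\<And>x. (F has_vector_derivative F' x) (at x)" and F'c: "continuous_on UNIV F'"
  assumes \<phi>: "test_fun \<phi>"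
  shows "(\<integral>x. F x * of_real (deriv \<phi> x) \<partial>lebesgue) = - (\<integral>x. F' x * of_real (\<phi> x) \<partial>lebesgue)"
proof -
  obtain R where R: "\<And>x. R < \<bar>x\<bar> \<Longrightarrow> \<phi> x = 0" using \<phi> by (auto simp: test_fun_def)
  have sm: "smooth \<phi>" using \<phi> by (simp add: test_fun_def smooth_def)
  define c where "c = \<bar>R\<bar> + 1"
  have out: "R < \<bar>x\<bar>" if "x \<notin> {-c..c}" for x using that by (auto simp: c_def)
  have c0: "-c \<le> c" by (simp add: c_def)
  have d\<phi>: "(\<phi> has_real_derivative deriv \<phi> x) (at x)" for x by (rule smooth_DERIV[OF sm])
  have dz: "deriv \<phi> x = 0" if x: "x \<notin> {-c..c}" for x
  proof -
    have "((\<lambda>_. 0) has_real_derivative 0) (at x)" by simp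
    then have "(\<phi> has_real_derivative 0) (at x)"
    proof (rule has_field_derivative_transform_within_open[where S="{..<-c} \<union> {c<..}"])
      show "open ({..<-c} \<union> {c<..})" by auto
      show "x \<in> {..<-c} \<union> {c<..}" using x by auto
      fix y assume "y \<in> {..<-c} \<union> {c<..}"
      then have "y \<notin> {-c..c}" by auto
      then show "0 = \<phi> y" using R out by metis
    qed
    then show ?thesis by (rule DERIV_imp_deriv)
  qed
  have Fc: "continuous_on UNIV F"
    using F by (meson continuous_at_imp_continuous_on has_vector_derivative_continuous)
  have \<phi>c: "continuous_on UNIV \<phi>" by (rule smooth_cont[OF sm])
  have \<phi>'c: "continuous_on UNIV (deriv \<phi>)" by (rule smooth_cont[OF smooth_deriv[OF sm]])
  have g1c: "continuous_on UNIV (\<lambda>x. F x * of_real (deriv \<phi> x))"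
    by (intro continuous_intros Fc \<phi>'c)
  have g2c: "continuous_on UNIV (\<lambda>x. F' x * of_real (\<phi> x))"
    by (intro continuous_intros F'c \<phi>c)
  have I1: "(\<integral>x. F x * of_real (deriv \<phi> x) \<partial>lebesgue) = integral {-c..c} (\<lambda>x. F x * of_real (deriv \<phi> x))"
    by (rule compact_integral(2)[OF g1c]) (simp add: dz)
  have I2: "(\<integral>x. F' x * of_real (\<phi> x) \<partial>lebesgue) = integral {-c..c} (\<lambda>x. F' x * of_real (\<phi> x))"
    by (rule compact_integral(2)[OF g2c]) (simp add: R out)
  define y where "y = - integral {-c..c} (\<lambda>x. F x * of_real (deriv \<phi> x))"
  have "((\<lambda>x. F' x * of_real (\<phi> x)) has_integral y) {-c..c}"
  proof (rule integration_by_parts[OF bounded_bilinear_mult c0])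
    show "continuous_on {-c..c} F" by (rule continuous_on_subset[OF Fc]) auto
    show "continuous_on {-c..c} (\<lambda>x. complex_of_real (\<phi> x))"
      by (rule continuous_on_subset[of UNIV]) (auto intro!: continuous_intros \<phi>c)
    show "(F has_vector_derivative F' x) (at x)" for x by (rule F)
    show "((\<lambda>x. complex_of_real (\<phi> x)) has_vector_derivative of_real (deriv \<phi> x)) (at x)" for x
      by (rule has_vector_derivative_of_real[OF d\<phi>])
    have "\<phi> c = 0" "\<phi> (-c) = 0" using R by (auto simp: c_def)
    moreover have "((\<lambda>x. F x * of_real (deriv \<phi> x)) has_integral integral {-c..c} (\<lambda>x. F x * of_real (deriv \<phi> x))) {-c..c}"
      by (intro integrable_integral integrable_continuous_real continuous_on_subset[OF g1c]) auto
    ultimately show "((\<lambda>x. F x * complex_of_real (deriv \<phi> x)) has_integral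
        F c * complex_of_real (\<phi> c) - F (- c) * complex_of_real (\<phi> (- c)) - y) {- c..c}"
      by (simp add: y_def)
  qed
  then have "integral {-c..c} (\<lambda>x. F' x * of_real (\<phi> x)) = y" by (rule integral_unique)
  then show ?thesis unfolding I1 I2 y_def by simp
qed

lemma t_rel_GP:
  assumes k: "0 < \<kappa>"
  shows "t_rel (GP \<kappa> m a) (GP \<kappa> m (tstep \<kappa> m a))"
  unfolding t_rel_def p_rel_def weak_deriv_def
proof (intro exI[of _ "\<lambda>x. of_real x * GP \<kappa> m (tstep \<kappa> m a) x"] conjI allI impI)
  show "L2 (GP \<kappa> m a)" "L2 (GP \<kappa> m (tstep \<kappa> m a))" using GP_L2[OF k] by auto
  show "L2 (\<lambda>x. of_real x * GP \<kappa> m (tstep \<kappa> m a) x)" by (rule xGP_L2[OF k])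
  show "AE x in lebesgue. of_real x * GP \<kappa> m (tstep \<kappa> m a) x = of_real x * GP \<kappa> m (tstep \<kappa> m a) x"
    by simp
  fix \<phi> :: "real \<Rightarrow> real" assume \<phi>: "test_fun \<phi>"
  show "(\<integral>x. GP \<kappa> m a x * of_real (deriv \<phi> x) \<partial>lebesgue) =
        - (\<integral>x. \<i> * (of_real x * GP \<kappa> m (tstep \<kappa> m a) x) * of_real (\<phi> x) \<partial>lebesgue)"
  proof (rule weak_deriv_C1[OF GP_vderiv _ \<phi>])
    show "continuous_on UNIV (\<lambda>x. \<i> * (of_real x * GP \<kappa> m (tstep \<kappa> m a) x))"
      by (intro continuous_intros GP_cont)
  qed
qed


definition bcoef :: "nat \<Rightarrow> real" where
  "bcoef k = (if odd k then 2 / real k else 0)"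

definition Dj :: "nat \<Rightarrow> real \<Rightarrow> real" where
  "Dj j a = (\<Sum>n. (diffs ^^ j) bcoef n * a ^ n)"

lemma summable_bcoef: "\<bar>a\<bar> < 1 \<Longrightarrow> summable (\<lambda>n. bcoef n * a ^ n)"
proof -
  assume a: "\<bar>a\<bar> < 1"
  have "summable (\<lambda>n. 2 * \<bar>a\<bar> ^ n)" using a by (intro summable_mult summable_geometric) auto
  moreover have "norm (bcoef n * a ^ n) \<le> 2 * \<bar>a\<bar> ^ n" for n
  proof -
    have "\<bar>bcoef n\<bar> \<le> 2" by (auto simp: bcoef_def divide_le_eq)
    then show ?thesis by (simp add: abs_mult power_abs mult_right_mono)
  qed
  ultimately show ?thesis by (rule summable_comparison_test'[where N=0])
qed

lemma summable_Dj: "\<bar>a\<bar> < 1 \<Longrightarrow> summable (\<lambda>n. (diffs ^^ j) bcoef n * a ^ n)"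
proof (induction j arbitrary: a)
  case 0
  then show ?case using summable_bcoef by simp
next
  case (Suc j)
  show ?case unfolding funpow.simps o_apply
    by (rule termdiff_converges[where K=1]) (use Suc in auto)
qed

lemma Dj_deriv: "\<bar>a\<bar> < 1 \<Longrightarrow> (Dj j has_real_derivative Dj (Suc j) a) (at a)"
  unfolding Dj_def[abs_def] funpow.simps o_apply
  by (rule termdiffs_strong'[where K=1]) (auto intro: summable_Dj)

lemma diffs_bcoef0: "diffs bcoef n = (if even n then 2 else 0)"
proof (cases "even n")
  case True
  then have "odd (Suc n)" by simp
  then show ?thesis using True unfolding diffs_def bcoef_def by (simp del: of_nat_Suc)
next
  case False
  then show ?thesis unfolding diffs_def bcoef_def by simp
qed

lemma diffs_bcoef: "diffs bcoef n * a ^ n = (if even n then 2 * (a\<^sup>2) ^ (n div 2) else 0)"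
proof (cases "even n")
  case True
  then obtain b where "n = 2 * b" by (elim evenE)
  then show ?thesis unfolding diffs_bcoef0 by (simp add: power_mult)
next
  case False
  then show ?thesis unfolding diffs_bcoef0 by simp
qed

lemma Dj1: "\<bar>a\<bar> < 1 \<Longrightarrow> Dj 1 a = 2 / (1 - a\<^sup>2)"
proof -
  assume a: "\<bar>a\<bar> < 1"
  have "norm (a\<^sup>2) < 1" using a by (simp add: abs_square_less_1)
  then have "(\<lambda>n. 2 * (a\<^sup>2) ^ n) sums (2 * (1 / (1 - a\<^sup>2)))"
    by (intro sums_mult geometric_sums)
  from sums_if[OF sums_zero this]
  have "(\<lambda>n. if even n then 2 * (a\<^sup>2) ^ (n div 2) else 0) sums (2 / (1 - a\<^sup>2))" by simp
  then have "(\<lambda>n. diffs bcoef n * a ^ n) sums (2 / (1 - a\<^sup>2))" unfolding diffs_bcoef .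
  then show ?thesis unfolding Dj_def by (simp add: sums_iff)
qed

lemma Dj0: "\<bar>a\<bar> < 1 \<Longrightarrow> Dj 0 a = ln ((1 + a) / (1 - a))"
proof -
  assume a: "\<bar>a\<bar> < 1"
  have "\<exists>c. \<forall>x\<in>{-1<..<1}. Dj 0 x - 2 * artanh x = c"
  proof (rule has_field_derivative_zero_constant)
    fix x :: real assume x: "x \<in> {-1<..<1}"
    then have x1: "\<bar>x\<bar> < 1" by auto
    have d1: "(Dj 0 has_real_derivative Dj 1 x) (at x)" using Dj_deriv[OF x1, of 0] by simp
    have d2: "(artanh has_real_derivative (1 / (1 - x\<^sup>2))) (at x)"
      using x by (intro artanh_real_has_field_derivative) auto
    have "((\<lambda>x. Dj 0 x - 2 * artanh x) has_real_derivative (Dj 1 x - 2 * (1 / (1 - x\<^sup>2)))) (at x)"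
      by (rule DERIV_diff[OF d1 DERIV_cmult[OF d2]])
    also have "Dj 1 x - 2 * (1 / (1 - x\<^sup>2)) = 0" using Dj1[OF x1] by simp
    finally show "((\<lambda>x. Dj 0 x - 2 * artanh x) has_real_derivative 0) (at x within {-1<..<1})"
      by (rule has_field_derivative_at_within)
  qed auto
  then obtain c where c: "\<And>x. x \<in> {-1<..<1} \<Longrightarrow> Dj 0 x - 2 * artanh x = c" by blast
  have "Dj 0 0 = 0" by (simp add: Dj_def bcoef_def)
  then have "c = 0" using c[of 0] by simp
  then show ?thesis using c[of a] a by (auto simp: artanh_def abs_less_iff)
qed

lemma binom_step:
  fixes s y :: real and d :: "nat \<Rightarrow> real"
  shows "y * (\<Sum>j\<le>m. real (m choose j) * s ^ j * y ^ (m - j) * d j)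
       + s * (\<Sum>j\<le>m. real (m choose j) * s ^ j * y ^ (m - j) * d (Suc j))
       = (\<Sum>j\<le>Suc m. real (Suc m choose j) * s ^ j * y ^ (Suc m - j) * d j)"
proof -
  have A1: "y * (\<Sum>j\<le>m. real (m choose j) * s ^ j * y ^ (m - j) * d j)
        = (\<Sum>j\<le>m. real (m choose j) * s ^ j * y ^ (Suc m - j) * d j)"
    unfolding sum_distrib_left by (rule sum.cong) (simp_all add: Suc_diff_le mult_ac)
  have A: "y * (\<Sum>j\<le>m. real (m choose j) * s ^ j * y ^ (m - j) * d j)
        = (\<Sum>j\<le>Suc m. real (m choose j) * s ^ j * y ^ (Suc m - j) * d j)"
    unfolding A1 by simp
  also have "\<dots> = y ^ Suc m * d 0 + (\<Sum>j\<le>m. real (m choose Suc j) * s ^ Suc j * y ^ (m - j) * d (Suc j))"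
    unfolding sum.atMost_Suc_shift by simp
  finally have A': "y * (\<Sum>j\<le>m. real (m choose j) * s ^ j * y ^ (m - j) * d j)
      = y ^ Suc m * d 0 + (\<Sum>j\<le>m. real (m choose Suc j) * s ^ Suc j * y ^ (m - j) * d (Suc j))" .
  have B: "s * (\<Sum>j\<le>m. real (m choose j) * s ^ j * y ^ (m - j) * d (Suc j))
        = (\<Sum>j\<le>m. real (m choose j) * s ^ Suc j * y ^ (m - j) * d (Suc j))"
    by (simp add: sum_distrib_left algebra_simps)
  have C: "(\<Sum>j\<le>Suc m. real (Suc m choose j) * s ^ j * y ^ (Suc m - j) * d j)
        = y ^ Suc m * d 0 + (\<Sum>j\<le>m. (real (m choose j) + real (m choose Suc j)) * s ^ Suc j * y ^ (m - j) * d (Suc j))"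
    unfolding sum.atMost_Suc_shift by simp
  show ?thesis unfolding A' B C by (simp add: sum.distrib algebra_simps)
qed

definition LamR :: "real \<Rightarrow> nat \<Rightarrow> real \<Rightarrow> real \<Rightarrow> real" where
  "LamR \<epsilon> m x a = (\<Sum>j\<le>m. real (m choose j) * (- 2 * sqrt \<epsilon>) ^ j * (x\<^sup>2) ^ (m - j) * Dj j a)"

lemma LamR_deriv:
  assumes "\<bar>a\<bar> < 1"
  shows "(LamR \<epsilon> m x has_real_derivative
          (\<Sum>j\<le>m. real (m choose j) * (- 2 * sqrt \<epsilon>) ^ j * (x\<^sup>2) ^ (m - j) * Dj (Suc j) a)) (at a)"
  unfolding LamR_def[abs_def]
  by (intro DERIV_sum DERIV_cmult Dj_deriv assms)

lemma Lambda_rep: "\<bar>a\<bar> < 1 \<Longrightarrow> Lambda \<epsilon> m x a = LamR \<epsilon> m x a"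
proof (induction m arbitrary: a)
  case 0
  then show ?case by (simp add: LamR_def Dj0)
next
  case (Suc m)
  have "(Lambda \<epsilon> m x has_real_derivative
          (\<Sum>j\<le>m. real (m choose j) * (- 2 * sqrt \<epsilon>) ^ j * (x\<^sup>2) ^ (m - j) * Dj (Suc j) a)) (at a)"
  proof (rule has_field_derivative_transform_within_open[OF LamR_deriv[OF Suc.prems], where S="{-1<..<1}"])
    show "open {-1<..<1::real}" by simp
    show "a \<in> {-1<..<1}" using Suc.prems by auto
    fix b :: real assume "b \<in> {-1<..<1}"
    then show "LamR \<epsilon> m x b = Lambda \<epsilon> m x b" using Suc.IH[of b] by auto
  qed
  then have dv: "deriv (Lambda \<epsilon> m x) a = (\<Sum>j\<le>m. real (m choose j) * (- 2 * sqrt \<epsilon>) ^ j * (x\<^sup>2) ^ (m - j) * Dj (Suc j) a)"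
    by (rule DERIV_imp_deriv)
  have "Lambda \<epsilon> (Suc m) x a = x\<^sup>2 * LamR \<epsilon> m x a + (- 2 * sqrt \<epsilon>) * deriv (Lambda \<epsilon> m x) a"
    using Suc.IH[OF Suc.prems] by simp
  also have "\<dots> = LamR \<epsilon> (Suc m) x a"
    unfolding dv LamR_def by (rule binom_step)
  finally show ?case .
qed

lemma diffs_funpow: "(diffs ^^ j) c k = (fact (k + j) / fact k) * (c (k + j) :: real)"
proof (induction j arbitrary: c k)
  case 0
  then show ?case by simp
next
  case (Suc j)
  have "(diffs ^^ Suc j) c k = (diffs ^^ j) (diffs c) k" by (simp add: funpow_Suc_right del: funpow.simps)
  also have "\<dots> = fact (k + j) / fact k * diffs c (k + j)" by (rule Suc.IH)
  also have "\<dots> = fact (k + Suc j) / fact k * c (k + Suc j)"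
    by (simp add: diffs_def algebra_simps add_divide_distrib)
  finally show ?case .
qed

lemma odd_sub_sums:
  fixes E :: "nat \<Rightarrow> real"
  assumes E: "E sums S" and ev: "\<And>n. E (2 * n) = 0"
  shows "(\<lambda>n. E (2 * n + 1)) sums S"
proof -
  have ps: "(\<Sum>n<N. E (2 * n + 1)) = (\<Sum>K<2 * N. E K)" for N
    by (induction N) (simp_all add: ev)
  have "(\<lambda>M. \<Sum>K<M. E K) \<longlonglongrightarrow> S" using E by (simp add: sums_def)
  then have "((\<lambda>M. \<Sum>K<M. E K) \<circ> (\<lambda>N. 2 * N)) \<longlonglongrightarrow> S"
    by (rule LIMSEQ_subseq_LIMSEQ) (simp add: strict_mono_def)
  then show ?thesis unfolding sums_def ps[abs_def] by (simp add: o_def)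
qed

lemma coef_sums:
  assumes a: "\<bar>a\<bar> < 1"
  shows "(\<lambda>n. fact j * real (2 * n + 1 choose j) * a ^ (2 * n + 1 - j) / real (2 * n + 1)) sums (Dj j a / 2)"
proof -
  define E where "E K = fact j * real (K choose j) * bcoef K * a ^ (K - j) / 2" for K
  have "(\<lambda>n. (diffs ^^ j) bcoef n * a ^ n) sums Dj j a"
    unfolding Dj_def using summable_Dj[OF a] by (rule summable_sums)
  then have "(\<lambda>n. (diffs ^^ j) bcoef n * a ^ n / 2) sums (Dj j a / 2)" by (rule sums_divide)
  moreover have "(diffs ^^ j) bcoef n * a ^ n / 2 = E (n + j)" for n
  proof -
    have "fact (n + j) / fact n = (fact j * real (n + j choose j) :: real)"
      by (simp add: binomial_fact field_simps)
    then show ?thesis unfolding diffs_funpow E_def by (simp add: add.commute)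
  qed
  ultimately have "(\<lambda>n. E (n + j)) sums (Dj j a / 2)" by simp
  then have "E sums (Dj j a / 2)" by (subst (asm) sums_zero_iff_shift) (auto simp: E_def binomial_eq_0)
  from odd_sub_sums[OF this]
  have "(\<lambda>n. E (2 * n + 1)) sums (Dj j a / 2)" by (simp add: E_def bcoef_def)
  moreover have "E (2 * n + 1) = fact j * real (2 * n + 1 choose j) * a ^ (2 * n + 1 - j) / real (2 * n + 1)" for n
  proof -
    have "real (2 * n + 1) \<noteq> 0" by simp
    then show ?thesis unfolding E_def bcoef_def by (simp add: field_simps del: of_nat_add of_nat_mult of_nat_Suc)
  qed
  ultimately show ?thesis by simp
qed


lemma ff_step:
  assumes "Suc j \<le> m"
  shows "fact (Suc j) * real (m choose Suc j) = real (m - j) * (fact j * real (m choose j))"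
proof -
  have e1: "fact (Suc j) * fact (m - Suc j) * (m choose Suc j) = fact m"
    by (rule binomial_fact_lemma) (use assms in simp)
  have e2: "fact j * fact (m - j) * (m choose j) = fact m"
    by (rule binomial_fact_lemma) (use assms in simp)
  have mj: "m - j = Suc (m - Suc j)" using assms by simp
  have e3: "fact (m - j) = Suc (m - Suc j) * (fact (m - Suc j) :: nat)" unfolding mj by simp
  have "(fact (Suc j) * (m choose Suc j)) * fact (m - Suc j) = ((m - j) * (fact j * (m choose j))) * (fact (m - Suc j) :: nat)"
    using e1 e2 unfolding e3 mj[symmetric] by (simp only: ac_simps)
  then have "fact (Suc j) * (m choose Suc j) = (m - j) * (fact j * (m choose j))"
    by (simp only: mult_right_cancel[OF fact_nonzero])
  then have "real (fact (Suc j) * (m choose Suc j)) = real ((m - j) * (fact j * (m choose j)))"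
    by (simp only:)
  then show ?thesis by (simp only: of_nat_mult of_nat_fact)
qed

definition acoef :: "real \<Rightarrow> real \<Rightarrow> nat \<Rightarrow> nat \<Rightarrow> nat \<Rightarrow> complex" where
  "acoef \<epsilon> \<alpha> m k j = (\<i> / of_real (sqrt \<epsilon>)) ^ k * of_real (fact j * real (m choose j)) *
      of_nat (k choose j) * of_real \<alpha> ^ (k - j) * of_real (- 2 * sqrt \<epsilon>) ^ j"

lemma GP_cong: "(\<And>j. j \<le> m \<Longrightarrow> a j = b j) \<Longrightarrow> GP \<kappa> m a = GP \<kappa> m b"
  unfolding GP_def[abs_def] by (intro ext arg_cong2[where f="(*)"] sum.cong) auto

lemma tstep_acoef:
  assumes e: "0 < \<epsilon>" and j: "j \<le> m"
  shows "tstep (\<alpha> / sqrt \<epsilon>) m (acoef \<epsilon> \<alpha> m k) j = acoef \<epsilon> \<alpha> m (Suc k) j"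
proof -
  define r where "r = \<i> / complex_of_real (sqrt \<epsilon>)"
  define s where "s = complex_of_real (- 2 * sqrt \<epsilon>)"
  define A where "A = complex_of_real \<alpha>"
  have se: "sqrt \<epsilon> \<noteq> 0" using e by simp
  have rA: "\<i> * of_real (\<alpha> / sqrt \<epsilon>) = r * A" unfolding r_def A_def by simp
  have rs: "r * s = - 2 * \<i>" unfolding r_def s_def using se by (simp add: field_simps)
  show ?thesis
  proof (cases j)
    case 0
    then show ?thesis unfolding tstep_def acoef_def rA r_def[symmetric] A_def[symmetric]
      by simp
  next
    case (Suc i)
    have i: "Suc i \<le> m" using j Suc by simp
    have ff: "complex_of_real (fact (Suc i) * real (m choose Suc i)) = of_nat (m - i) * of_real (fact i * real (m choose i))"
      using ff_step[OF i] by (metis of_real_mult of_real_of_nat_eq)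
    have mi: "m - Suc i + 1 = m - i" using i by simp
    have t1: "of_nat (k choose Suc i) * A ^ (k - i) = A * (of_nat (k choose Suc i) * A ^ (k - Suc i))"
    proof (cases "Suc i \<le> k")
      case True
      then have "k - i = Suc (k - Suc i)" by simp
      then show ?thesis by simp
    next
      case False
      then show ?thesis by (simp add: binomial_eq_0)
    qed
    have "acoef \<epsilon> \<alpha> m (Suc k) j = r ^ Suc k * of_real (fact (Suc i) * real (m choose Suc i)) *
        (of_nat (k choose Suc i) + of_nat (k choose i)) * A ^ (k - i) * s ^ Suc i"
      unfolding acoef_def Suc r_def[symmetric] s_def[symmetric] A_def[symmetric] by simp
    also have "\<dots> = r * A * (r ^ k * of_real (fact (Suc i) * real (m choose Suc i)) * of_nat (k choose Suc i) * A ^ (k - Suc i) * s ^ Suc i)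
        + (r * s) * of_nat (m - i) * (r ^ k * of_real (fact i * real (m choose i)) * of_nat (k choose i) * A ^ (k - i) * s ^ i)"
      unfolding ff using t1 by (simp add: algebra_simps)
    also have "\<dots> = tstep (\<alpha> / sqrt \<epsilon>) m (acoef \<epsilon> \<alpha> m k) j"
      unfolding tstep_def acoef_def Suc rA rs r_def[symmetric] s_def[symmetric] A_def[symmetric] mi
      by (simp add: algebra_simps)
    finally show ?thesis by simp
  qed
qed

lemma t_pow_acoef:
  assumes e: "0 < \<epsilon>" and a: "0 < \<alpha>"
  shows "t_pow k (GP (\<alpha> / sqrt \<epsilon>) m (acoef \<epsilon> \<alpha> m l)) (GP (\<alpha> / sqrt \<epsilon>) m (acoef \<epsilon> \<alpha> m (l + k)))"
proof (induction k arbitrary: l)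
  case 0
  show ?case using GP_L2[of "\<alpha> / sqrt \<epsilon>"] e a by simp
next
  case (Suc k)
  have k: "0 < \<alpha> / sqrt \<epsilon>" using e a by simp
  have "GP (\<alpha> / sqrt \<epsilon>) m (tstep (\<alpha> / sqrt \<epsilon>) m (acoef \<epsilon> \<alpha> m l)) = GP (\<alpha> / sqrt \<epsilon>) m (acoef \<epsilon> \<alpha> m (Suc l))"
    by (rule GP_cong) (rule tstep_acoef[OF e])
  then have "t_rel (GP (\<alpha> / sqrt \<epsilon>) m (acoef \<epsilon> \<alpha> m l)) (GP (\<alpha> / sqrt \<epsilon>) m (acoef \<epsilon> \<alpha> m (Suc l)))"
    using t_rel_GP[OF k, of m "acoef \<epsilon> \<alpha> m l"] by simp
  moreover have "t_pow k (GP (\<alpha> / sqrt \<epsilon>) m (acoef \<epsilon> \<alpha> m (Suc l))) (GP (\<alpha> / sqrt \<epsilon>) m (acoef \<epsilon> \<alpha> m (l + Suc k)))"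
    using Suc.IH[of "Suc l"] by simp
  ultimately show ?case by auto
qed


lemma GP_lin: "GP \<kappa> m (\<lambda>j. \<Sum>n\<le>M. c n * b n j) x = (\<Sum>n\<le>M. c n * GP \<kappa> m (b n) x)"
  unfolding GP_def sum_distrib_right sum_distrib_left
  by (subst sum.swap) (simp add: mult_ac)

lemma GP_diff: "GP \<kappa> m (\<lambda>j. a j - b j) x = GP \<kappa> m a x - GP \<kappa> m b x"
  unfolding GP_def by (simp add: sum_subtractf algebra_simps)

lemma GP_scale: "GP \<kappa> m (\<lambda>j. c * a j) x = c * GP \<kappa> m a x"
  unfolding GP_def by (simp add: sum_distrib_left algebra_simps)

lemma GP_even: "GP \<kappa> m a (- x) = GP \<kappa> m a x"
  unfolding GP_def xi_def by simp

lemma GP_L2_conv: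
  assumes k: "0 < \<kappa>" and d: "\<And>j. j \<le> m \<Longrightarrow> (\<lambda>N. \<delta> N j) \<longlonglongrightarrow> 0"
  shows "(\<lambda>N. \<integral>x. (cmod (GP \<kappa> m (\<delta> N) x))\<^sup>2 \<partial>lebesgue) \<longlonglongrightarrow> 0"
proof -
  define B where "B x = (1 + \<bar>x\<bar> ^ (2*m)) * xi \<kappa> x" for x
  have "L2 (\<lambda>x. complex_of_real (B x))"
  proof (rule L2_bound[OF k, where C=1 and N="2*m"])
    show "(\<lambda>x. complex_of_real (B x)) \<in> borel_measurable lebesgue"
      unfolding B_def xi_def by (intro cont_meas_leb continuous_intros) auto
    fix x show "cmod (complex_of_real (B x)) \<le> 1 * (1 + \<bar>x\<bar> ^ (2*m)) * xi \<kappa> x"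
      unfolding B_def norm_of_real using xi_pos[of \<kappa> x] by (simp add: abs_mult)
  qed
  then have Bi: "integrable lebesgue (\<lambda>x. (B x)\<^sup>2)" by (simp add: L2_def)
  define K where "K = (\<integral>x. (B x)\<^sup>2 \<partial>lebesgue)"
  define S where "S N = (\<Sum>j\<le>m. cmod (\<delta> N j))" for N
  have S: "(\<lambda>N. S N) \<longlonglongrightarrow> 0"
  proof -
    have "(\<lambda>N. \<Sum>j\<le>m. cmod (\<delta> N j)) \<longlonglongrightarrow> (\<Sum>j\<le>m. 0)"
      by (intro tendsto_sum tendsto_norm_zero d) auto
    then show ?thesis by (simp add: S_def)
  qed
  have S0: "0 \<le> S N" for N by (simp add: S_def sum_nonneg)
  have ptw: "(cmod (GP \<kappa> m (\<delta> N) x))\<^sup>2 \<le> (S N)\<^sup>2 * (B x)\<^sup>2" for N x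
  proof -
    have "cmod (GP \<kappa> m (\<delta> N) x) \<le> S N * B x" using GP_bound[of \<kappa> m "\<delta> N" x] by (simp add: S_def B_def mult.assoc)
    then have "(cmod (GP \<kappa> m (\<delta> N) x))\<^sup>2 \<le> (S N * B x)\<^sup>2" by (intro power_mono) auto
    then show ?thesis by (simp add: power_mult_distrib)
  qed
  have Gi: "integrable lebesgue (\<lambda>x. (cmod (GP \<kappa> m (\<delta> N) x))\<^sup>2)" for N
    using GP_L2[OF k] by (simp add: L2_def)
  show ?thesis
  proof (rule tendsto_sandwich[where f="\<lambda>N. 0" and h="\<lambda>N. (S N)\<^sup>2 * K"])
    show "\<forall>\<^sub>F N in sequentially. 0 \<le> (\<integral>x. (cmod (GP \<kappa> m (\<delta> N) x))\<^sup>2 \<partial>lebesgue)"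
      by (intro always_eventually allI integral_nonneg_AE) auto
    show "\<forall>\<^sub>F N in sequentially. (\<integral>x. (cmod (GP \<kappa> m (\<delta> N) x))\<^sup>2 \<partial>lebesgue) \<le> (S N)\<^sup>2 * K"
    proof (intro always_eventually allI)
      fix N
      have "(\<integral>x. (cmod (GP \<kappa> m (\<delta> N) x))\<^sup>2 \<partial>lebesgue) \<le> (\<integral>x. (S N)\<^sup>2 * (B x)\<^sup>2 \<partial>lebesgue)"
        by (rule integral_mono[OF Gi]) (use Bi ptw in auto)
      then show "(\<integral>x. (cmod (GP \<kappa> m (\<delta> N) x))\<^sup>2 \<partial>lebesgue) \<le> (S N)\<^sup>2 * K"
        by (simp add: K_def)
    qed
    show "(\<lambda>N. 0) \<longlonglongrightarrow> (0::real)" by simp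
    have "(\<lambda>N. (S N)\<^sup>2 * K) \<longlonglongrightarrow> 0\<^sup>2 * K" by (intro tendsto_intros S)
    then show "(\<lambda>N. (S N)\<^sup>2 * K) \<longlonglongrightarrow> 0" by simp
  qed
qed

definition wS :: "real \<Rightarrow> nat \<Rightarrow> real" where
  "wS \<epsilon> n = (-1) ^ n / real (2 * n + 1) * sqrt \<epsilon> ^ (2 * n + 1)"

lemma wa:
  assumes e: "0 < \<epsilon>"
  shows "of_real (wS \<epsilon> n) * acoef \<epsilon> \<alpha> m (2 * n + 1) j
    = \<i> * of_real (real (m choose j) * (- 2 * sqrt \<epsilon>) ^ j) *
      of_real (fact j * real (2 * n + 1 choose j) * \<alpha> ^ (2 * n + 1 - j) / real (2 * n + 1))"
proof -
  have se: "complex_of_real (sqrt \<epsilon>) \<noteq> 0" using e by simp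
  have p: "(\<i> / complex_of_real (sqrt \<epsilon>)) ^ (2 * n + 1) * complex_of_real (sqrt \<epsilon>) ^ (2 * n + 1) = \<i> * (-1) ^ n"
  proof -
    have "(\<i> / complex_of_real (sqrt \<epsilon>)) ^ (2 * n + 1) * complex_of_real (sqrt \<epsilon>) ^ (2 * n + 1)
        = (\<i> / complex_of_real (sqrt \<epsilon>) * complex_of_real (sqrt \<epsilon>)) ^ (2 * n + 1)"
      by (simp only: power_mult_distrib)
    also have "\<dots> = \<i> ^ (2 * n + 1)" using se by simp
    also have "\<dots> = \<i> * (-1) ^ n" by (simp add: power_mult)
    finally show ?thesis .
  qed
  define Q where "Q = of_real (fact j * real (m choose j)) * of_nat (2 * n + 1 choose j) *
      complex_of_real \<alpha> ^ (2 * n + 1 - j) * complex_of_real (- 2 * sqrt \<epsilon>) ^ j"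
  define R where "R = (\<i> / complex_of_real (sqrt \<epsilon>)) ^ (2 * n + 1)"
  define V where "V = complex_of_real (sqrt \<epsilon>) ^ (2 * n + 1)"
  define W where "W = complex_of_real ((-1) ^ n / real (2 * n + 1))"
  have "of_real (wS \<epsilon> n) * acoef \<epsilon> \<alpha> m (2 * n + 1) j = W * (R * V) * Q"
    unfolding wS_def acoef_def Q_def R_def V_def W_def by (simp only: of_real_mult of_real_power mult_ac)
  also have "R * V = \<i> * (-1) ^ n" using p unfolding R_def V_def .
  also have "W * (\<i> * (-1) ^ n) = \<i> / of_nat (2 * n + 1)"
    unfolding W_def by (simp add: field_simps)
  finally show ?thesis unfolding Q_def by (simp add: field_simps)
qed


lemma L2_meas: "L2 f \<Longrightarrow> f \<in> borel_measurable lebesgue" by (simp add: L2_def)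
lemma L2_int: "L2 f \<Longrightarrow> integrable lebesgue (\<lambda>x. (cmod (f x))\<^sup>2)" by (simp add: L2_def)

lemma sq_add_le: "(a + b)\<^sup>2 \<le> 2 * a\<^sup>2 + 2 * (b::real)\<^sup>2"
proof -
  have "0 \<le> (a - b)\<^sup>2" by simp
  then show ?thesis by (simp add: power2_eq_square algebra_simps)
qed

lemma L2_add:
  assumes f: "L2 f" and g: "L2 g" shows "L2 (\<lambda>x. f x + g x)"
  unfolding L2_def
proof
  have [measurable]: "f \<in> borel_measurable lebesgue" "g \<in> borel_measurable lebesgue"
    using f g by (auto simp: L2_def)
  show "(\<lambda>x. f x + g x) \<in> borel_measurable lebesgue" by measurable
  show "integrable lebesgue (\<lambda>x. (cmod (f x + g x))\<^sup>2)"
  proof (rule Bochner_Integration.integrable_bound)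
    show "integrable lebesgue (\<lambda>x. 2 * (cmod (f x))\<^sup>2 + 2 * (cmod (g x))\<^sup>2)"
      using L2_int[OF f] L2_int[OF g] by auto
    show "(\<lambda>x. (cmod (f x + g x))\<^sup>2) \<in> borel_measurable lebesgue" by measurable
    show "AE x in lebesgue. norm ((cmod (f x + g x))\<^sup>2) \<le> norm (2 * (cmod (f x))\<^sup>2 + 2 * (cmod (g x))\<^sup>2)"
    proof (intro AE_I2)
      fix x
      have "(cmod (f x + g x))\<^sup>2 \<le> (cmod (f x) + cmod (g x))\<^sup>2"
        by (intro power_mono norm_triangle_ineq) auto
      also have "\<dots> \<le> 2 * (cmod (f x))\<^sup>2 + 2 * (cmod (g x))\<^sup>2" by (rule sq_add_le)
      finally show "norm ((cmod (f x + g x))\<^sup>2) \<le> norm (2 * (cmod (f x))\<^sup>2 + 2 * (cmod (g x))\<^sup>2)"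
        by simp
    qed
  qed
qed

lemma L2_scale:
  assumes f: "L2 f" shows "L2 (\<lambda>x. c * f x)"
  unfolding L2_def
proof
  have [measurable]: "f \<in> borel_measurable lebesgue" using f by (auto simp: L2_def)
  show "(\<lambda>x. c * f x) \<in> borel_measurable lebesgue" by measurable
  have "integrable lebesgue (\<lambda>x. (cmod c)\<^sup>2 * (cmod (f x))\<^sup>2)" using L2_int[OF f] by auto
  then show "integrable lebesgue (\<lambda>x. (cmod (c * f x))\<^sup>2)" by (simp add: norm_mult power_mult_distrib)
qed

lemma L2_diff: "L2 f \<Longrightarrow> L2 g \<Longrightarrow> L2 (\<lambda>x. f x - g x)"
  using L2_add[of f "\<lambda>x. (-1) * g x"] L2_scale[of g "-1"] by simp

lemma L2_sum: "(\<And>n. n \<le> N \<Longrightarrow> L2 (F n)) \<Longrightarrow> L2 (\<lambda>x. \<Sum>n\<le>(N::nat). F n x)"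
proof (induction N)
  case 0
  then show ?case by simp
next
  case (Suc N)
  then show ?case by (simp add: L2_add)
qed

lemma L2_AE: "L2 f \<Longrightarrow> AE x in lebesgue. g x = f x \<Longrightarrow> L2 g"
proof -
  assume f: "L2 f" and ae: "AE x in lebesgue. g x = f x"
  have fm: "f \<in> borel_measurable lebesgue" using f by (simp add: L2_def)
  have gm: "g \<in> borel_measurable lebesgue"
    by (rule borel_measurable_AE[OF fm]) (use ae in \<open>auto elim: eventually_mono\<close>)
  have "integrable lebesgue (\<lambda>x. (cmod (f x))\<^sup>2) \<longleftrightarrow> integrable lebesgue (\<lambda>x. (cmod (g x))\<^sup>2)"
    by (rule integrable_cong_AE) (use fm gm ae in \<open>auto elim: eventually_mono\<close>)
  then show "L2 g" using f gm by (simp add: L2_def)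
qed

lemma test_sq_int:
  assumes "test_fun \<phi>" shows "integrable lebesgue (\<lambda>x. (\<phi> x)\<^sup>2)"
proof -
  obtain R where R: "\<And>x. R < \<bar>x\<bar> \<Longrightarrow> \<phi> x = 0" using assms by (auto simp: test_fun_def)
  have sm: "smooth \<phi>" using assms by (simp add: test_fun_def smooth_def)
  have c: "continuous_on UNIV (\<lambda>x. complex_of_real ((\<phi> x)\<^sup>2))"
    by (intro continuous_intros smooth_cont[OF sm])
  have ci: "integrable lebesgue (\<lambda>x. complex_of_real ((\<phi> x)\<^sup>2))"
    by (rule compact_integral(1)[OF c, of "-\<bar>R\<bar>" "\<bar>R\<bar>"]) (use R in auto)
  have "integrable lebesgue (\<lambda>x. Re (complex_of_real ((\<phi> x)\<^sup>2)))" by (rule integrable_Re[OF ci])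
  then show ?thesis by (simp only: Re_complex_of_real)
qed

lemma L2_test_int:
  assumes g: "L2 g" and \<phi>: "test_fun \<phi>"
  shows "integrable lebesgue (\<lambda>x. g x * of_real (\<phi> x))"
proof (rule Bochner_Integration.integrable_bound)
  have sm: "smooth \<phi>" using \<phi> by (simp add: test_fun_def smooth_def)
  have [measurable]: "g \<in> borel_measurable lebesgue" using g by (simp add: L2_def)
  have [measurable]: "\<phi> \<in> borel_measurable lebesgue" by (rule cont_meas_leb[OF smooth_cont[OF sm]])
  show "integrable lebesgue (\<lambda>x. (cmod (g x))\<^sup>2 + (\<phi> x)\<^sup>2)"
    using L2_int[OF g] test_sq_int[OF \<phi>] by auto
  show "(\<lambda>x. g x * of_real (\<phi> x)) \<in> borel_measurable lebesgue" by measurable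
  show "AE x in lebesgue. norm (g x * of_real (\<phi> x)) \<le> norm ((cmod (g x))\<^sup>2 + (\<phi> x)\<^sup>2)"
  proof (intro AE_I2)
    fix x
    have "0 \<le> (cmod (g x) - \<bar>\<phi> x\<bar>)\<^sup>2" by simp
    then have h1: "2 * (cmod (g x) * \<bar>\<phi> x\<bar>) \<le> (cmod (g x))\<^sup>2 + (\<bar>\<phi> x\<bar>)\<^sup>2"
      by (simp add: power2_eq_square algebra_simps)
    have h2: "0 \<le> cmod (g x) * \<bar>\<phi> x\<bar>" by simp
    have h1': "2 * (cmod (g x) * \<bar>\<phi> x\<bar>) \<le> (cmod (g x))\<^sup>2 + (\<phi> x)\<^sup>2" using h1 by simp
    from h1' h2 have "cmod (g x) * \<bar>\<phi> x\<bar> \<le> (cmod (g x))\<^sup>2 + (\<phi> x)\<^sup>2" by linarith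
    then show "norm (g x * of_real (\<phi> x)) \<le> norm ((cmod (g x))\<^sup>2 + (\<phi> x)\<^sup>2)"
      by (simp add: norm_mult)
  qed
qed

lemma AE_leb_nonzero: "AE x in lebesgue. x \<noteq> (0::real)"
  by (rule AE_completion[OF AE_lborel_singleton])

lemma t_rel_unique:
  assumes t1: "t_rel f h1" and t2: "t_rel f' h2" and ae: "AE x in lebesgue. f x = f' x"
  shows "AE x in lebesgue. h1 x = h2 x"
proof -
  obtain g1 where p1: "p_rel f g1" and l1: "L2 h1" and a1: "AE x in lebesgue. g1 x = of_real x * h1 x"
    using t1 by (auto simp: t_rel_def)
  obtain g2 where p2: "p_rel f' g2" and l2: "L2 h2" and a2: "AE x in lebesgue. g2 x = of_real x * h2 x"
    using t2 by (auto simp: t_rel_def)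
  have f: "L2 f" "L2 g1" "weak_deriv f (\<lambda>x. \<i> * g1 x)" using p1 by (auto simp: p_rel_def)
  have f': "L2 f'" "L2 g2" "weak_deriv f' (\<lambda>x. \<i> * g2 x)" using p2 by (auto simp: p_rel_def)
  have "AE x in lebesgue. g1 x - g2 x = 0"
  proof (rule fund_lemma)
    show "L2 (\<lambda>x. g1 x - g2 x)" by (rule L2_diff[OF f(2) f'(2)])
    fix \<phi> :: "real \<Rightarrow> real" assume \<phi>: "test_fun \<phi>"
    have sm: "smooth \<phi>" using \<phi> by (simp add: test_fun_def smooth_def)
    have [measurable]: "deriv \<phi> \<in> borel_measurable lebesgue"
      by (rule cont_meas_leb[OF smooth_cont[OF smooth_deriv[OF sm]]])
    have [measurable]: "f \<in> borel_measurable lebesgue" "f' \<in> borel_measurable lebesgue"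
      using f f' by (auto simp: L2_def)
    have "(\<integral>x. f x * of_real (deriv \<phi> x) \<partial>lebesgue) = (\<integral>x. f' x * of_real (deriv \<phi> x) \<partial>lebesgue)"
      by (rule integral_cong_AE) (use ae in \<open>auto elim: eventually_mono\<close>)
    then have "(\<integral>x. \<i> * g1 x * of_real (\<phi> x) \<partial>lebesgue) = (\<integral>x. \<i> * g2 x * of_real (\<phi> x) \<partial>lebesgue)"
      using f(3) f'(3) \<phi> unfolding weak_deriv_def by auto
    then have "\<i> * (\<integral>x. g1 x * of_real (\<phi> x) \<partial>lebesgue) = \<i> * (\<integral>x. g2 x * of_real (\<phi> x) \<partial>lebesgue)"
      by (simp add: mult.assoc)
    then have e: "(\<integral>x. g1 x * of_real (\<phi> x) \<partial>lebesgue) = (\<integral>x. g2 x * of_real (\<phi> x) \<partial>lebesgue)" by simp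
    have "(\<integral>x. (g1 x - g2 x) * of_real (\<phi> x) \<partial>lebesgue)
        = (\<integral>x. g1 x * of_real (\<phi> x) - g2 x * of_real (\<phi> x) \<partial>lebesgue)"
      by (simp add: algebra_simps)
    also have "\<dots> = (\<integral>x. g1 x * of_real (\<phi> x) \<partial>lebesgue) - (\<integral>x. g2 x * of_real (\<phi> x) \<partial>lebesgue)"
      by (rule Bochner_Integration.integral_diff[OF L2_test_int[OF f(2) \<phi>] L2_test_int[OF f'(2) \<phi>]])
    finally show "(\<integral>x. (g1 x - g2 x) * of_real (\<phi> x) \<partial>lebesgue) = 0" using e by simp
  qed
  with a1 a2 AE_leb_nonzero show ?thesis
    by eventually_elim auto
qed

lemma t_pow_unique:
  fixes k :: nat and f f' h1 h2 :: "real \<Rightarrow> complex"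
  shows "t_pow k f h1 \<Longrightarrow> t_pow k f' h2 \<Longrightarrow> AE x in lebesgue. f x = f' x \<Longrightarrow> AE x in lebesgue. h1 x = h2 x"
proof (induction k arbitrary: f f' h1 h2)
  case 0
  then have a: "AE x in lebesgue. h1 x = f x" "AE x in lebesgue. h2 x = f' x" "AE x in lebesgue. f x = f' x"
    by auto
  from a show ?case by eventually_elim auto
next
  case (Suc k)
  obtain g1 where g1: "t_rel f g1" "t_pow k g1 h1" using Suc.prems by auto
  obtain g2 where g2: "t_rel f' g2" "t_pow k g2 h2" using Suc.prems by auto
  have "AE x in lebesgue. g1 x = g2 x" by (rule t_rel_unique[OF g1(1) g2(1) Suc.prems(3)])
  then show ?case by (rule Suc.IH[OF g1(2) g2(2)])
qed

lemma t_pow_L2: "t_pow k f h \<Longrightarrow> L2 h"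
proof (induction k arbitrary: f)
  case 0
  then show ?case using L2_AE by auto
next
  case (Suc k)
  then show ?case by auto
qed


definition hc :: "real \<Rightarrow> real \<Rightarrow> nat \<Rightarrow> nat \<Rightarrow> complex" where
  "hc \<epsilon> \<alpha> m j = - \<i> / (2 * sqrt \<epsilon>) * of_real (real (m choose j) * (- 2 * sqrt \<epsilon>) ^ j * Dj j \<alpha>)"

lemma xi_eq: "0 < \<epsilon> \<Longrightarrow> xi (\<alpha> / sqrt \<epsilon>) x = exp (- \<alpha> * x\<^sup>2 / (2 * sqrt \<epsilon>))"
  unfolding xi_def by (simp add: field_simps)

lemma h0_eq:
  assumes e: "0 < \<epsilon>" and a: "\<bar>\<alpha>\<bar> < 1"
  shows "GP (\<alpha> / sqrt \<epsilon>) m (hc \<epsilon> \<alpha> m) x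
       = - \<i> / (2 * sqrt \<epsilon>) * of_real (Lambda \<epsilon> m x \<alpha> * exp (- \<alpha> * x\<^sup>2 / (2 * sqrt \<epsilon>)))"
proof -
  have "Lambda \<epsilon> m x \<alpha> = LamR \<epsilon> m x \<alpha>" by (rule Lambda_rep[OF a])
  then show ?thesis unfolding GP_def hc_def LamR_def xi_eq[OF e]
    by (simp add: sum_distrib_left sum_distrib_right mult_ac)
qed

lemma acoef0: "acoef \<epsilon> \<alpha> m 0 j = (if j = 0 then 1 else 0)"
  by (cases j) (simp_all add: acoef_def)

lemma f_eq:
  assumes e: "0 < \<epsilon>"
  shows "complex_of_real (x ^ (2 * m) * exp (- \<alpha> * x\<^sup>2 / (2 * sqrt \<epsilon>))) = GP (\<alpha> / sqrt \<epsilon>) m (acoef \<epsilon> \<alpha> m 0) x"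
proof -
  have "(\<Sum>j\<le>m. acoef \<epsilon> \<alpha> m 0 j * complex_of_real ((x\<^sup>2) ^ (m - j))) = complex_of_real ((x\<^sup>2) ^ m)"
  proof -
    have "(\<Sum>j\<le>m. acoef \<epsilon> \<alpha> m 0 j * complex_of_real ((x\<^sup>2) ^ (m - j)))
        = (\<Sum>j\<le>m. if j = 0 then complex_of_real ((x\<^sup>2) ^ (m - j)) else 0)"
      unfolding acoef0 by (rule sum.cong) auto
    also have "\<dots> = complex_of_real ((x\<^sup>2) ^ m)" by (subst sum.delta) auto
    finally show ?thesis .
  qed
  then show ?thesis unfolding GP_def xi_eq[OF e] by (simp add: power_mult)
qed

lemma conv1:
  assumes e: "0 < \<epsilon>" and a0: "0 < \<alpha>" and a1: "\<alpha> < 1"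
  shows "(\<lambda>N. \<integral>x. (cmod ((\<Sum>n\<le>N. of_real (wS \<epsilon> n) * GP (\<alpha> / sqrt \<epsilon>) m (acoef \<epsilon> \<alpha> m (2 * n + 1)) x)
            - of_real (- sqrt \<epsilon>) * GP (\<alpha> / sqrt \<epsilon>) m (hc \<epsilon> \<alpha> m) x))\<^sup>2 \<partial>lebesgue) \<longlonglongrightarrow> 0"
proof -
  define \<delta> where "\<delta> N j = (\<Sum>n\<le>N. of_real (wS \<epsilon> n) * acoef \<epsilon> \<alpha> m (2 * n + 1) j) - of_real (- sqrt \<epsilon>) * hc \<epsilon> \<alpha> m j"
    for N j
  have eq: "(\<Sum>n\<le>N. of_real (wS \<epsilon> n) * GP (\<alpha> / sqrt \<epsilon>) m (acoef \<epsilon> \<alpha> m (2 * n + 1)) x)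
            - of_real (- sqrt \<epsilon>) * GP (\<alpha> / sqrt \<epsilon>) m (hc \<epsilon> \<alpha> m) x = GP (\<alpha> / sqrt \<epsilon>) m (\<delta> N) x" for N x
    unfolding \<delta>_def GP_diff GP_lin GP_scale ..
  have lim: "(\<lambda>N. \<delta> N j) \<longlonglongrightarrow> 0" if "j \<le> m" for j
  proof -
    define e where "e n = fact j * real (2 * n + 1 choose j) * \<alpha> ^ (2 * n + 1 - j) / real (2 * n + 1)" for n
    define c where "c = \<i> * complex_of_real (real (m choose j) * (- 2 * sqrt \<epsilon>) ^ j)"
    have "\<bar>\<alpha>\<bar> < 1" using a0 a1 by simp
    from coef_sums[OF this, of j] have "(\<lambda>N. \<Sum>n\<le>N. e n) \<longlonglongrightarrow> Dj j \<alpha> / 2"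
      unfolding sums_def_le e_def .
    then have l1: "(\<lambda>N. c * of_real (\<Sum>n\<le>N. e n)) \<longlonglongrightarrow> c * of_real (Dj j \<alpha> / 2)"
      by (intro tendsto_intros)
    have e2: "(\<lambda>N. \<Sum>n\<le>N. of_real (wS \<epsilon> n) * acoef \<epsilon> \<alpha> m (2 * n + 1) j) = (\<lambda>N. c * of_real (\<Sum>n\<le>N. e n))"
      unfolding wa[OF e] c_def e_def by (simp add: sum_distrib_left mult.assoc)
    have e3: "of_real (- sqrt \<epsilon>) * hc \<epsilon> \<alpha> m j = c * of_real (Dj j \<alpha> / 2)"
      using e unfolding hc_def c_def by (simp add: field_simps)
    have "(\<lambda>N. (\<Sum>n\<le>N. of_real (wS \<epsilon> n) * acoef \<epsilon> \<alpha> m (2 * n + 1) j) - of_real (- sqrt \<epsilon>) * hc \<epsilon> \<alpha> m j)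
        \<longlonglongrightarrow> c * of_real (Dj j \<alpha> / 2) - c * of_real (Dj j \<alpha> / 2)"
      unfolding e3 using tendsto_diff[OF l1[folded e2] tendsto_const[of "c * of_real (Dj j \<alpha> / 2)"]] .
    then show ?thesis unfolding \<delta>_def by simp
  qed
  have k: "0 < \<alpha> / sqrt \<epsilon>" using e a0 by simp
  show ?thesis unfolding eq by (rule GP_L2_conv[OF k lim])
qed

lemma part1:
  assumes e: "0 < \<epsilon>" and a0: "0 < \<alpha>" and a1: "\<alpha> < 1"
  shows "S_rel \<epsilon> (GP (\<alpha> / sqrt \<epsilon>) m (acoef \<epsilon> \<alpha> m 0)) (GP (\<alpha> / sqrt \<epsilon>) m (hc \<epsilon> \<alpha> m))"
proof -
  have k: "0 < \<alpha> / sqrt \<epsilon>" using e a0 by simp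
  show ?thesis
    unfolding S_rel_def L2_even_def
  proof (intro conjI exI[of _ "\<lambda>n. GP (\<alpha> / sqrt \<epsilon>) m (acoef \<epsilon> \<alpha> m (2 * n + 1))"] allI)
    show "L2 (GP (\<alpha> / sqrt \<epsilon>) m (acoef \<epsilon> \<alpha> m 0))" "L2 (GP (\<alpha> / sqrt \<epsilon>) m (hc \<epsilon> \<alpha> m))"
      using GP_L2[OF k] by auto
    show "AE x in lebesgue. GP (\<alpha> / sqrt \<epsilon>) m (acoef \<epsilon> \<alpha> m 0) (- x) = GP (\<alpha> / sqrt \<epsilon>) m (acoef \<epsilon> \<alpha> m 0) x"
      by (simp add: GP_even)
    fix n
    show "t_pow (2 * n + 1) (GP (\<alpha> / sqrt \<epsilon>) m (acoef \<epsilon> \<alpha> m 0)) (GP (\<alpha> / sqrt \<epsilon>) m (acoef \<epsilon> \<alpha> m (2 * n + 1)))"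
      using t_pow_acoef[OF e a0, of "2 * n + 1" m 0] by simp
  next
    show "(\<lambda>N. \<integral>x. (cmod ((\<Sum>n\<le>N. complex_of_real ((- 1) ^ n / real (2 * n + 1) * sqrt \<epsilon> ^ (2 * n + 1)) *
                  GP (\<alpha> / sqrt \<epsilon>) m (acoef \<epsilon> \<alpha> m (2 * n + 1)) x) -
               complex_of_real (- sqrt \<epsilon>) * GP (\<alpha> / sqrt \<epsilon>) m (hc \<epsilon> \<alpha> m) x))\<^sup>2 \<partial>lebesgue) \<longlonglongrightarrow> 0"
      using conv1[OF e a0 a1, of m] unfolding wS_def .
  qed
qed

lemma part2:
  assumes e: "0 < \<epsilon>" and a0: "0 < \<alpha>" and a1: "\<alpha> < 1"
  assumes S: "S_rel \<epsilon> (GP (\<alpha> / sqrt \<epsilon>) m (acoef \<epsilon> \<alpha> m 0)) h"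
  shows "AE x in lebesgue. h x = GP (\<alpha> / sqrt \<epsilon>) m (hc \<epsilon> \<alpha> m) x"
proof -
  define \<kappa> where "\<kappa> = \<alpha> / sqrt \<epsilon>"
  have k: "0 < \<kappa>" using e a0 by (simp add: \<kappa>_def)
  define F0 where "F0 = GP \<kappa> m (acoef \<epsilon> \<alpha> m 0)"
  define h0 where "h0 = GP \<kappa> m (hc \<epsilon> \<alpha> m)"
  define T where "T n = GP \<kappa> m (acoef \<epsilon> \<alpha> m (2 * n + 1))" for n
  define c where "c n = complex_of_real (wS \<epsilon> n)" for n
  from S obtain T' where hL: "L2 h" and T': "\<And>n. t_pow (2 * n + 1) F0 (T' n)"
    and cv: "(\<lambda>N. \<integral>x. (cmod ((\<Sum>n\<le>N. c n * T' n x) - of_real (- sqrt \<epsilon>) * h x))\<^sup>2 \<partial>lebesgue) \<longlonglongrightarrow> 0"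
    unfolding S_rel_def F0_def \<kappa>_def c_def wS_def by blast
  have Tt: "t_pow (2 * n + 1) F0 (T n)" for n
    using t_pow_acoef[OF e a0, of "2 * n + 1" m 0] by (simp add: F0_def T_def \<kappa>_def)
  have aeT: "AE x in lebesgue. T' n x = T n x" for n
    by (rule t_pow_unique[OF T' Tt]) simp
  then have aeT': "AE x in lebesgue. \<forall>n. T' n x = T n x" by (simp add: AE_all_countable)
  have T'L: "L2 (T' n)" for n by (rule t_pow_L2[OF T'])
  have TL: "L2 (T n)" for n unfolding T_def by (rule GP_L2[OF k])
  have h0L: "L2 h0" unfolding h0_def by (rule GP_L2[OF k])
  define P where "P N x = (\<Sum>n\<le>N. c n * T n x)" for N x
  have PL: "L2 (P N)" for N unfolding P_def[abs_def] by (intro L2_sum L2_scale TL)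
  have UL: "L2 (\<lambda>x. of_real (- sqrt \<epsilon>) * h x)" by (rule L2_scale[OF hL])
  have VL: "L2 (\<lambda>x. of_real (- sqrt \<epsilon>) * h0 x)" by (rule L2_scale[OF h0L])
  have A: "(\<lambda>N. \<integral>x. (cmod (P N x - of_real (- sqrt \<epsilon>) * h x))\<^sup>2 \<partial>lebesgue) \<longlonglongrightarrow> 0"
  proof -
    have "(\<integral>x. (cmod ((\<Sum>n\<le>N. c n * T' n x) - of_real (- sqrt \<epsilon>) * h x))\<^sup>2 \<partial>lebesgue)
        = (\<integral>x. (cmod (P N x - of_real (- sqrt \<epsilon>) * h x))\<^sup>2 \<partial>lebesgue)" for N
    proof (rule integral_cong_AE)
      have [measurable]: "T' n \<in> borel_measurable lebesgue" for n using T'L[of n] by (rule L2_meas)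
      have [measurable]: "T n \<in> borel_measurable lebesgue" for n using TL[of n] by (rule L2_meas)
      have [measurable]: "h \<in> borel_measurable lebesgue" using hL by (rule L2_meas)
      show "(\<lambda>x. (cmod ((\<Sum>n\<le>N. c n * T' n x) - of_real (- sqrt \<epsilon>) * h x))\<^sup>2) \<in> borel_measurable lebesgue"
        by measurable
      show "(\<lambda>x. (cmod (P N x - of_real (- sqrt \<epsilon>) * h x))\<^sup>2) \<in> borel_measurable lebesgue"
        unfolding P_def by measurable
      show "AE x in lebesgue. (cmod ((\<Sum>n\<le>N. c n * T' n x) - of_real (- sqrt \<epsilon>) * h x))\<^sup>2
          = (cmod (P N x - of_real (- sqrt \<epsilon>) * h x))\<^sup>2"
        using aeT' by eventually_elim (simp add: P_def)
    qed
    with cv show ?thesis by simp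
  qed
  have B: "(\<lambda>N. \<integral>x. (cmod (P N x - of_real (- sqrt \<epsilon>) * h0 x))\<^sup>2 \<partial>lebesgue) \<longlonglongrightarrow> 0"
    using conv1[OF e a0 a1, of m] unfolding P_def T_def h0_def c_def \<kappa>_def .
  define D where "D = (\<integral>x. (cmod (of_real (- sqrt \<epsilon>) * h x - of_real (- sqrt \<epsilon>) * h0 x))\<^sup>2 \<partial>lebesgue)"
  have Di: "integrable lebesgue (\<lambda>x. (cmod (of_real (- sqrt \<epsilon>) * h x - of_real (- sqrt \<epsilon>) * h0 x))\<^sup>2)"
    using L2_diff[OF UL VL] by (rule L2_int)
  have Dle: "D \<le> 2 * (\<integral>x. (cmod (P N x - of_real (- sqrt \<epsilon>) * h x))\<^sup>2 \<partial>lebesgue)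
               + 2 * (\<integral>x. (cmod (P N x - of_real (- sqrt \<epsilon>) * h0 x))\<^sup>2 \<partial>lebesgue)" for N
  proof -
    have i1: "integrable lebesgue (\<lambda>x. (cmod (P N x - of_real (- sqrt \<epsilon>) * h x))\<^sup>2)"
      using L2_diff[OF PL UL] by (rule L2_int)
    have i2: "integrable lebesgue (\<lambda>x. (cmod (P N x - of_real (- sqrt \<epsilon>) * h0 x))\<^sup>2)"
      using L2_diff[OF PL VL] by (rule L2_int)
    have "D \<le> (\<integral>x. 2 * (cmod (P N x - of_real (- sqrt \<epsilon>) * h x))\<^sup>2
                 + 2 * (cmod (P N x - of_real (- sqrt \<epsilon>) * h0 x))\<^sup>2 \<partial>lebesgue)"
      unfolding D_def
    proof (rule integral_mono[OF Di])
      show "integrable lebesgue (\<lambda>x. 2 * (cmod (P N x - of_real (- sqrt \<epsilon>) * h x))\<^sup>2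
                 + 2 * (cmod (P N x - of_real (- sqrt \<epsilon>) * h0 x))\<^sup>2)" using i1 i2 by auto
      fix x
      let ?u = "of_real (- sqrt \<epsilon>) * h x" and ?v = "of_real (- sqrt \<epsilon>) * h0 x" and ?p = "P N x"
      have "cmod (?u - ?v) \<le> cmod (?p - ?u) + cmod (?p - ?v)"
        using norm_triangle_ineq4[of "?p - ?v" "?p - ?u"] by (simp add: norm_minus_commute)
      then have "(cmod (?u - ?v))\<^sup>2 \<le> (cmod (?p - ?u) + cmod (?p - ?v))\<^sup>2" by (intro power_mono) auto
      also have "\<dots> \<le> 2 * (cmod (?p - ?u))\<^sup>2 + 2 * (cmod (?p - ?v))\<^sup>2" by (rule sq_add_le)
      finally show "(cmod (?u - ?v))\<^sup>2 \<le> 2 * (cmod (?p - ?u))\<^sup>2 + 2 * (cmod (?p - ?v))\<^sup>2" .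
    qed
    also have "\<dots> = 2 * (\<integral>x. (cmod (P N x - of_real (- sqrt \<epsilon>) * h x))\<^sup>2 \<partial>lebesgue)
               + 2 * (\<integral>x. (cmod (P N x - of_real (- sqrt \<epsilon>) * h0 x))\<^sup>2 \<partial>lebesgue)"
      using i1 i2 by simp
    finally show ?thesis .
  qed
  have "(\<lambda>N. 2 * (\<integral>x. (cmod (P N x - of_real (- sqrt \<epsilon>) * h x))\<^sup>2 \<partial>lebesgue)
               + 2 * (\<integral>x. (cmod (P N x - of_real (- sqrt \<epsilon>) * h0 x))\<^sup>2 \<partial>lebesgue)) \<longlonglongrightarrow> 2 * 0 + 2 * 0"
    by (intro tendsto_intros A B)
  then have "D \<le> 2 * 0 + 2 * 0" by (rule LIMSEQ_le_const) (use Dle in auto)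
  moreover have "0 \<le> D" unfolding D_def by (rule integral_nonneg_AE) auto
  ultimately have "D = 0" by simp
  then have "AE x in lebesgue. (cmod (of_real (- sqrt \<epsilon>) * h x - of_real (- sqrt \<epsilon>) * h0 x))\<^sup>2 = 0"
    unfolding D_def using integral_nonneg_eq_0_iff_AE[OF Di] by simp
  then have "AE x in lebesgue. h x = h0 x"
  proof eventually_elim
    case (elim x)
    then have "of_real (- sqrt \<epsilon>) * (h x - h0 x) = 0" by (simp add: algebra_simps)
    then show ?case using e by simp
  qed
  then show ?thesis by (simp add: h0_def \<kappa>_def)
qed


theorem lemma3p6:
  fixes \<epsilon> \<alpha> :: real
  assumes "0 < \<epsilon>" "\<epsilon> \<le> 1" "0 < \<alpha>" "\<alpha> < 1"
  defines "\<xi> \<equiv> (\<lambda>x::real. exp (- \<alpha> * x\<^sup>2 / (2 * sqrt \<epsilon>)))"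
  defines "f \<equiv> (\<lambda>(m::nat) (x::real). complex_of_real (x ^ (2 * m) * \<xi> x))"
  shows "(\<forall>m. S_rel \<epsilon> (f m) (\<lambda>x. - \<i> / (2 * sqrt \<epsilon>) * of_real (Lambda \<epsilon> m x \<alpha> * \<xi> x))) \<and>
         (\<forall>n m h. S_rel \<epsilon> (f m) h \<longrightarrow>
           integral\<^sup>L lebesgue (\<lambda>x. cnj (f n x) * h x)
             = - \<i> / (2 * sqrt \<epsilon>) *
               of_real (integral\<^sup>L lebesgue (\<lambda>x. \<xi> x * x ^ (2 * n) * Lambda \<epsilon> m x \<alpha> * \<xi> x)))"
proof -
  have e: "0 < \<epsilon>" and a0: "0 < \<alpha>" and a1: "\<alpha> < 1" using assms by auto
  have aa: "\<bar>\<alpha>\<bar> < 1" using a0 a1 by simp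
  have fm: "f m = GP (\<alpha> / sqrt \<epsilon>) m (acoef \<epsilon> \<alpha> m 0)" for m
    unfolding f_def \<xi>_def using f_eq[OF e] by (intro ext) simp
  have hm: "(\<lambda>x. - \<i> / (2 * sqrt \<epsilon>) * of_real (Lambda \<epsilon> m x \<alpha> * \<xi> x)) = GP (\<alpha> / sqrt \<epsilon>) m (hc \<epsilon> \<alpha> m)" for m
    unfolding \<xi>_def using h0_eq[OF e aa] by (intro ext) simp
  have k: "0 < \<alpha> / sqrt \<epsilon>" using e a0 by simp
  show ?thesis
  proof (intro conjI allI impI)
    fix m
    show "S_rel \<epsilon> (f m) (\<lambda>x. - \<i> / (2 * sqrt \<epsilon>) * of_real (Lambda \<epsilon> m x \<alpha> * \<xi> x))"
      unfolding fm hm by (rule part1[OF e a0 a1])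
  next
    fix n m h assume S: "S_rel \<epsilon> (f m) h"
    have ae: "AE x in lebesgue. h x = GP (\<alpha> / sqrt \<epsilon>) m (hc \<epsilon> \<alpha> m) x"
      by (rule part2[OF e a0 a1]) (use S fm in simp)
    have hL: "L2 h" using S by (simp add: S_rel_def)
    have [measurable]: "h \<in> borel_measurable lebesgue" using hL by (rule L2_meas)
    have [measurable]: "f n \<in> borel_measurable lebesgue" unfolding fm by (rule GP_meas)
    have [measurable]: "GP (\<alpha> / sqrt \<epsilon>) m (hc \<epsilon> \<alpha> m) \<in> borel_measurable lebesgue" by (rule GP_meas)
    have "integral\<^sup>L lebesgue (\<lambda>x. cnj (f n x) * h x)
        = integral\<^sup>L lebesgue (\<lambda>x. cnj (f n x) * GP (\<alpha> / sqrt \<epsilon>) m (hc \<epsilon> \<alpha> m) x)"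
    proof (rule integral_cong_AE)
      have fnm: "(\<lambda>x. f n x) \<in> borel_measurable lebesgue" unfolding fm by (rule GP_meas)
      have gm: "(\<lambda>x. GP (\<alpha> / sqrt \<epsilon>) m (hc \<epsilon> \<alpha> m) x) \<in> borel_measurable lebesgue" by (rule GP_meas)
      have cf: "(\<lambda>x. cnj (f n x)) = (\<lambda>x. f n x)" by (auto simp: f_def)
      have cnm: "(\<lambda>x. cnj (f n x)) \<in> borel_measurable lebesgue" unfolding cf by (rule fnm)
      have hmeas: "(\<lambda>x. h x) \<in> borel_measurable lebesgue" using hL by (simp add: L2_def)
      show "(\<lambda>x. cnj (f n x) * h x) \<in> borel_measurable lebesgue"
        by (rule borel_measurable_times[OF cnm hmeas])
      show "(\<lambda>x. cnj (f n x) * GP (\<alpha> / sqrt \<epsilon>) m (hc \<epsilon> \<alpha> m) x) \<in> borel_measurable lebesgue"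
        by (rule borel_measurable_times[OF cnm gm])
    qed (use ae in \<open>auto elim: eventually_mono\<close>)
    also have "\<dots> = integral\<^sup>L lebesgue (\<lambda>x. - \<i> / (2 * sqrt \<epsilon>) *
               of_real (\<xi> x * x ^ (2 * n) * Lambda \<epsilon> m x \<alpha> * \<xi> x))"
    proof (rule Bochner_Integration.integral_cong[OF refl])
      fix x
      have "GP (\<alpha> / sqrt \<epsilon>) m (hc \<epsilon> \<alpha> m) x = - \<i> / (2 * sqrt \<epsilon>) * of_real (Lambda \<epsilon> m x \<alpha> * \<xi> x)"
        using fun_cong[OF hm[of m], of x] by simp
      then show "cnj (f n x) * GP (\<alpha> / sqrt \<epsilon>) m (hc \<epsilon> \<alpha> m) x = - \<i> / (2 * sqrt \<epsilon>) *
               of_real (\<xi> x * x ^ (2 * n) * Lambda \<epsilon> m x \<alpha> * \<xi> x)"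
        unfolding f_def by (simp add: mult_ac)
    qed
    also have "\<dots> = - \<i> / (2 * sqrt \<epsilon>) *
               of_real (integral\<^sup>L lebesgue (\<lambda>x. \<xi> x * x ^ (2 * n) * Lambda \<epsilon> m x \<alpha> * \<xi> x))"
      by (simp only: integral_mult_right_zero integral_complex_of_real)
    finally show "integral\<^sup>L lebesgue (\<lambda>x. cnj (f n x) * h x)
             = - \<i> / (2 * sqrt \<epsilon>) *
               of_real (integral\<^sup>L lebesgue (\<lambda>x. \<xi> x * x ^ (2 * n) * Lambda \<epsilon> m x \<alpha> * \<xi> x))" .
  qed
qed


end
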